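(* The ideal $I^{(k,r)}\subset V$ is stable under the action of $\mathcal H_n^{(k,r)}$ on $V$, i.e. it is a subrepresentation.
   Context: Let $\tilde{\mathbb K}=\mathbb C(t^{1/2},q)$. The double affine Hecke algebra $\mathcal H_n$ of type $GL_n$ is the $\tilde{\mathbb K}$-algebra generated by $X_i^{\pm1},Y_i^{\pm1}$ ($1\le i\le n$), $T_j$ ($1\le j\le n-1$) with relations: $X$'s commute, $Y$'s commute; $(T_i-t^{1/2})(T_i+t^{-1/2})=0$; braid relations for the $T_i$; $T_iX_iT_i=X_{i+1}$; $T_iX_j=X_jT_i$ ($j\ne i,i+1$); $T_i^{-1}Y_iT_i^{-1}=Y_{i+1}$; $T_iY_j=Y_jT_i$ ($j\ne i,i+1$); $Y_2^{-1}X_1Y_2X_1^{-1}=T_1^2$; $Y_i\tilde X=q\tilde XY_i$ ($\tilde X=\prod X_i$); $X_i\tilde Y=q^{-1}\tilde YX_i$ ($\tilde Y=\prod Y_i$). It acts on $U=\tilde{\mathbb K}[x_1^{\pm1},\dots,x_n^{\pm1}]$ by $X_i\mapsto x_i$, $T_i\mapsto t^{1/2}s_i+\frac{t^{1/2}-t^{-1/2}}{x_i/x_{i+1}-1}(s_i-1)$, $Y_i\mapsto T_i\cdots T_{n-1}\omega T_1^{-1}\cdots T_{i-1}^{-1}$, with $s_i$ swapping $x_i,x_{i+1}$ and $(\omega f)(x_1,\dots,x_n)=f(qx_n,x_1,\dots,x_{n-1})$. Fix integers $n\ge2$, $1\le k\le n-1$, $r\ge2$, $g=\gcd(k+1,r-1)$,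 $\tau=e^{2\pi\sqrt{-1}/(r-1)}$, and specialize $(\ast)$: $t=u^{(r-1)/g}$, $q=\tau u^{-(k+1)/g}$. $\mathbb K$, $\mathcal H_n^{(k,r)}$, $V=\mathbb K[x_1^{\pm1},\dots,x_n^{\pm1}]$ are the images under $(\ast)$ of the elements of $\tilde{\mathbb K}$, $\mathcal H_n$, $U$ regular at $(\ast)$. $Z^{(k,r)}$ is the set of $z\in\mathbb K^n$ for which there exist distinct $i_1,\dots,i_{k+1}\in\{1,\dots,n\}$ and $s_1,\dots,s_k\in\mathbb Z_{\ge0}$ with $z_{i_{a+1}}=z_{i_a}tq^{s_a}$ ($1\le a\le k$), $\sum_as_a\le r-2$, and $i_a<i_{a+1}$ whenever $s_a=0$; $I^{(k,r)}=\{f\in V:f(z)=0\ \forall z\in Z^{(k,r)}\}$. *)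

theory Defs
  imports Complex_Main "HOL-Library.Poly_Mapping" "HOL-Computational_Algebra.Polynomial"
    "HOL-Computational_Algebra.Fraction_Field"
begin

text \<open>A Laurent monomial is an exponent vector (nat =>0 int); a Laurent polynomial
  with coefficients in 'a is a finitely supported map from exponent vectors to 'a.
  With Poly_Mapping's convolution product this is the ring 'a[x_1^{+-1}, x_2^{+-1}, ...].\<close>

type_synonym 'a laurent = "(nat \<Rightarrow>\<^sub>0 int) \<Rightarrow>\<^sub>0 'a"

definition evec :: "nat \<Rightarrow> (nat \<Rightarrow>\<^sub>0 int)" where
  "evec i = Poly_Mapping.single i 1"

definition lconst :: "'a::comm_ring_1 \<Rightarrow> 'a laurent" where
  "lconst c = Poly_Mapping.single 0 c"

definition lvar :: "nat \<Rightarrow> 'a::comm_ring_1 laurent" where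
  "lvar i = Poly_Mapping.single (evec i) 1"

definition lvar_inv :: "nat \<Rightarrow> 'a::comm_ring_1 laurent" where
  "lvar_inv i = Poly_Mapping.single (- evec i) 1"

definition laurentV :: "nat \<Rightarrow> 'a::comm_ring_1 laurent set" where
  "laurentV n = {f. \<forall>\<alpha>\<in>Poly_Mapping.keys f. Poly_Mapping.keys \<alpha> \<subseteq> {1..n}}"

text \<open>evaluation f(z) at a point z (used at points with nonzero coordinates)\<close>
definition leval :: "(nat \<Rightarrow> 'a::field) \<Rightarrow> 'a laurent \<Rightarrow> 'a" where
  "leval z f = (\<Sum>\<alpha>\<in>Poly_Mapping.keys f.
      Poly_Mapping.lookup f \<alpha> * (\<Prod>i\<in>Poly_Mapping.keys \<alpha>. z i powi Poly_Mapping.lookup \<alpha> i))"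

text \<open>monomial substitution x_j |-> c_j * x_(sigma j), extended as a ring map\<close>
definition msubst :: "(nat \<Rightarrow> 'a::field) \<Rightarrow> (nat \<Rightarrow> nat) \<Rightarrow> 'a laurent \<Rightarrow> 'a laurent" where
  "msubst c \<sigma> f = (\<Sum>\<alpha>\<in>Poly_Mapping.keys f.
      Poly_Mapping.single
        (\<Sum>j\<in>Poly_Mapping.keys \<alpha>. Poly_Mapping.single (\<sigma> j) (Poly_Mapping.lookup \<alpha> j))
        (Poly_Mapping.lookup f \<alpha> * (\<Prod>j\<in>Poly_Mapping.keys \<alpha>. c j powi Poly_Mapping.lookup \<alpha> j)))"

section \<open>The polynomial representation of the DAHA (parameters st = t^(1/2), q)\<close>

definition swp :: "nat \<Rightarrow> 'a::field laurent \<Rightarrow> 'a laurent" where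
  "swp i f = msubst (\<lambda>_. 1) (\<lambda>j. if j = i then i + 1 else if j = i + 1 then i else j) f"

text \<open>(omega f)(x_1,...,x_n) = f(q x_n, x_1, ..., x_(n-1))\<close>
definition omega :: "'a::field \<Rightarrow> nat \<Rightarrow> 'a laurent \<Rightarrow> 'a laurent" where
  "omega q n f = msubst (\<lambda>j. if j = 1 then q else 1)
                        (\<lambda>j. if j = 1 then n else if 2 \<le> j \<and> j \<le> n then j - 1 else j) f"

text \<open>T_i f = st s_i f + (st - st^(-1)) / (x_i/x_(i+1) - 1) (s_i f - f), i.e. the unique g
  with (x_i x_(i+1)^(-1) - 1)(g - st s_i f) = (st - st^(-1)) (s_i f - f).\<close>
definition heckeT :: "'a::field \<Rightarrow> nat \<Rightarrow> 'a laurent \<Rightarrow> 'a laurent" where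
  "heckeT st i f = (THE g. (lvar i * lvar_inv (i + 1) - 1) * (g - lconst st * swp i f)
                          = lconst (st - inverse st) * (swp i f - f))"

definition heckeTinv :: "'a::field \<Rightarrow> nat \<Rightarrow> 'a laurent \<Rightarrow> 'a laurent" where
  "heckeTinv st i f = (THE g. heckeT st i g = f)"

definition daha_Y :: "'a::field \<Rightarrow> 'a \<Rightarrow> nat \<Rightarrow> nat \<Rightarrow> 'a laurent \<Rightarrow> 'a laurent" where
  "daha_Y st q n i f = foldr (heckeT st) [i..<n] (omega q n (foldr (heckeTinv st) [1..<i] f))"

definition daha_Yinv :: "'a::field \<Rightarrow> 'a \<Rightarrow> nat \<Rightarrow> nat \<Rightarrow> 'a laurent \<Rightarrow> 'a laurent" where
  "daha_Yinv st q n i f = (THE g. daha_Y st q n i g = f)"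

text \<open>Let a = (r-1)/g, b = (k+1)/g, v = u^(1/2) (so t^(1/2) = v^a, q = tau v^(-2b)) and
  d = gcd a (2b).  The field K = C(v^a, v^(2b)) = C(w) with w = v^d, a rational function
  field in one variable; we realise it as the type complex poly fract with w = X.\<close>

type_synonym K = "complex poly fract"

definition wvar :: K where "wvar = Fract [:0, 1:] 1"

definition spec_a :: "nat \<Rightarrow> nat \<Rightarrow> nat" where
  "spec_a k r = (r - 1) div gcd (k + 1) (r - 1)"

definition spec_b :: "nat \<Rightarrow> nat \<Rightarrow> nat" where
  "spec_b k r = (k + 1) div gcd (k + 1) (r - 1)"

definition spec_d :: "nat \<Rightarrow> nat \<Rightarrow> nat" where
  "spec_d k r = gcd (spec_a k r) (2 * spec_b k r)"

definition spec_tau :: "nat \<Rightarrow> K" where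
  "spec_tau r = Fract [:cis (2 * pi / real (r - 1)):] 1"

definition spec_st :: "nat \<Rightarrow> nat \<Rightarrow> K" where
  "spec_st k r = wvar ^ (spec_a k r div spec_d k r)"

definition spec_t :: "nat \<Rightarrow> nat \<Rightarrow> K" where
  "spec_t k r = (spec_st k r) ^ 2"

definition spec_q :: "nat \<Rightarrow> nat \<Rightarrow> K" where
  "spec_q k r = spec_tau r * (inverse wvar) ^ (2 * spec_b k r div spec_d k r)"

definition wheelZ :: "nat \<Rightarrow> nat \<Rightarrow> nat \<Rightarrow> (nat \<Rightarrow> K) set" where
  "wheelZ n k r = {z. (\<forall>j\<in>{1..n}. z j \<noteq> 0) \<and>
     (\<exists>ii s. (\<forall>a\<in>{1..k+1}. ii a \<in> {1..n}) \<and> inj_on ii {1..k+1} \<and>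
        (\<forall>a\<in>{1..k}. z (ii (a + 1)) = z (ii a) * spec_t k r * spec_q k r ^ (s a :: nat) \<and>
                     (s a = 0 \<longrightarrow> ii a < ii (a + 1))) \<and>
        (\<Sum>a=1..k. s a) \<le> r - 2)}"

definition idealI :: "nat \<Rightarrow> nat \<Rightarrow> nat \<Rightarrow> K laurent set" where
  "idealI n k r = {f \<in> laurentV n. \<forall>z\<in>wheelZ n k r. leval z f = 0}"

end

theory Submission
  imports Defs
begin

definition mon :: "(nat \<Rightarrow> 'a::field) \<Rightarrow> (nat \<Rightarrow>\<^sub>0 int) \<Rightarrow> 'a" where
  "mon z \<alpha> = (\<Prod>i\<in>Poly_Mapping.keys \<alpha>. z i powi Poly_Mapping.lookup \<alpha> i)"

lemma leval_mon: "leval z f = (\<Sum>\<alpha>\<in>Poly_Mapping.keys f. Poly_Mapping.lookup f \<alpha> * mon z \<alpha>)"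
  by (simp add: leval_def mon_def)

lemma mon_superset:
  assumes "finite S" "Poly_Mapping.keys \<alpha> \<subseteq> S"
  shows "mon z \<alpha> = (\<Prod>i\<in>S. z i powi Poly_Mapping.lookup \<alpha> i)"
  unfolding mon_def using assms
  by (intro prod.mono_neutral_left) (auto simp: in_keys_iff)

lemma leval_superset:
  assumes "finite S" "Poly_Mapping.keys f \<subseteq> S"
  shows "leval z f = (\<Sum>\<alpha>\<in>S. Poly_Mapping.lookup f \<alpha> * mon z \<alpha>)"
  unfolding leval_mon using assms
  by (intro sum.mono_neutral_left) (auto simp: in_keys_iff)

lemma leval_add: "leval z (f + g) = leval z f + leval z g"
proof -
  let ?S = "Poly_Mapping.keys f \<union> Poly_Mapping.keys g"
  have "leval z (f + g) = (\<Sum>\<alpha>\<in>?S. Poly_Mapping.lookup (f+g) \<alpha> * mon z \<alpha>)"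
    by (rule leval_superset) (auto simp: keys_add)
  also have "\<dots> = (\<Sum>\<alpha>\<in>?S. Poly_Mapping.lookup f \<alpha> * mon z \<alpha>) + (\<Sum>\<alpha>\<in>?S. Poly_Mapping.lookup g \<alpha> * mon z \<alpha>)"
    by (simp add: lookup_add distrib_right sum.distrib)
  also have "\<dots> = leval z f + leval z g"
    by (subst (1 2) leval_superset[where S="?S"]) auto
  finally show ?thesis .
qed

lemma leval_zero[simp]: "leval z 0 = 0"
  by (simp add: leval_def)

lemma leval_single: "leval z (Poly_Mapping.single \<alpha> v) = v * mon z \<alpha>"
  by (simp add: leval_mon)

lemma leval_sum: "leval z (\<Sum>x\<in>A. F x) = (\<Sum>x\<in>A. leval z (F x))"
  by (induction A rule: infinite_finite_induct) (auto simp: leval_add)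

lemma leval_uminus: "leval z (- f) = - leval z f"
  using leval_add[of z f "-f"] by (simp add: eq_neg_iff_add_eq_0 add.commute)

lemma leval_diff: "leval z (f - g) = leval z f - leval z g"
  using leval_add[of z f "-g"] leval_uminus[of z g] by simp

lemma mon_add:
  assumes "\<forall>i. z i \<noteq> 0"
  shows "mon z (\<alpha> + \<beta>) = mon z \<alpha> * mon z \<beta>"
proof -
  let ?S = "Poly_Mapping.keys \<alpha> \<union> Poly_Mapping.keys \<beta>"
  have "mon z (\<alpha> + \<beta>) = (\<Prod>i\<in>?S. z i powi Poly_Mapping.lookup (\<alpha>+\<beta>) i)"
    by (rule mon_superset) (auto simp: keys_add)
  also have "\<dots> = (\<Prod>i\<in>?S. z i powi Poly_Mapping.lookup \<alpha> i) * (\<Prod>i\<in>?S. z i powi Poly_Mapping.lookup \<beta> i)"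
    using assms by (simp add: lookup_add power_int_add prod.distrib)
  also have "\<dots> = mon z \<alpha> * mon z \<beta>"
    by (subst (1 2) mon_superset[where S="?S"]) auto
  finally show ?thesis .
qed

lemma pm_expand: "f = (\<Sum>\<alpha>\<in>Poly_Mapping.keys f. Poly_Mapping.single \<alpha> (Poly_Mapping.lookup f \<alpha>))"
proof (rule poly_mapping_eqI)
  fix k
  show "Poly_Mapping.lookup f k = Poly_Mapping.lookup (\<Sum>\<alpha>\<in>Poly_Mapping.keys f. Poly_Mapping.single \<alpha> (Poly_Mapping.lookup f \<alpha>)) k"
    by (simp add: lookup_sum lookup_single when_def in_keys_iff)
qed

lemma leval_mult:
  assumes "\<forall>i. z i \<noteq> 0"
  shows "leval z (f * g) = leval z f * leval z g"
proof -
  let ?A = "Poly_Mapping.keys f" and ?B = "Poly_Mapping.keys g"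
  have "f * g = (\<Sum>\<alpha>\<in>?A. Poly_Mapping.single \<alpha> (Poly_Mapping.lookup f \<alpha>)) * (\<Sum>\<beta>\<in>?B. Poly_Mapping.single \<beta> (Poly_Mapping.lookup g \<beta>))"
    by (subst (1) pm_expand, subst (1) pm_expand[of g]) simp
  also have "\<dots> = (\<Sum>\<alpha>\<in>?A. \<Sum>\<beta>\<in>?B. Poly_Mapping.single (\<alpha>+\<beta>) (Poly_Mapping.lookup f \<alpha> * Poly_Mapping.lookup g \<beta>))"
    by (simp add: sum_product mult_single)
  finally have "leval z (f*g) = (\<Sum>\<alpha>\<in>?A. \<Sum>\<beta>\<in>?B. Poly_Mapping.lookup f \<alpha> * Poly_Mapping.lookup g \<beta> * mon z (\<alpha>+\<beta>))"
    by (simp add: leval_sum leval_single)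
  also have "\<dots> = (\<Sum>\<alpha>\<in>?A. \<Sum>\<beta>\<in>?B. (Poly_Mapping.lookup f \<alpha> * mon z \<alpha>) * (Poly_Mapping.lookup g \<beta> * mon z \<beta>))"
    using assms by (simp add: mon_add mult_ac)
  also have "\<dots> = leval z f * leval z g"
    by (simp add: leval_mon sum_product)
  finally show ?thesis .
qed

lemma mon_zero[simp]: "mon z 0 = 1" by (simp add: mon_def)

lemma leval_one[simp]: "leval z 1 = 1"
  by (simp add: leval_mon)

lemma leval_lconst[simp]: "leval z (lconst c) = c"
  by (simp add: lconst_def leval_single)

lemma mon_evec[simp]: "mon z (evec i) = z i"
  by (simp add: mon_def evec_def)

lemma mon_mevec[simp]: "mon z (- evec i) = inverse (z i)"
  by (simp add: mon_def evec_def power_int_minus)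

lemma leval_lvar[simp]: "leval z (lvar i) = z i"
  by (simp add: lvar_def leval_single)

lemma leval_lvar_inv[simp]: "leval z (lvar_inv i) = inverse (z i)"
  by (simp add: lvar_inv_def leval_single)

lemma mon_push:
  assumes "inj \<sigma>"
  shows "mon z (\<Sum>j\<in>Poly_Mapping.keys \<alpha>. Poly_Mapping.single (\<sigma> j) (Poly_Mapping.lookup \<alpha> j))
         = (\<Prod>j\<in>Poly_Mapping.keys \<alpha>. z (\<sigma> j) powi Poly_Mapping.lookup \<alpha> j)"
proof -
  let ?\<beta> = "\<Sum>j\<in>Poly_Mapping.keys \<alpha>. Poly_Mapping.single (\<sigma> j) (Poly_Mapping.lookup \<alpha> j)"
  have lk: "Poly_Mapping.lookup ?\<beta> (\<sigma> j) = Poly_Mapping.lookup \<alpha> j" for j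
  proof -
    have "Poly_Mapping.lookup ?\<beta> (\<sigma> j) = (\<Sum>j'\<in>Poly_Mapping.keys \<alpha>. if j' = j then Poly_Mapping.lookup \<alpha> j' else 0)"
      using assms by (simp add: lookup_sum lookup_single when_def inj_eq)
    also have "\<dots> = Poly_Mapping.lookup \<alpha> j"
      by (simp add: in_keys_iff)
    finally show ?thesis .
  qed
  have ks: "Poly_Mapping.keys ?\<beta> \<subseteq> \<sigma> ` Poly_Mapping.keys \<alpha>"
    using keys_sum[of "\<lambda>j. Poly_Mapping.single (\<sigma> j) (Poly_Mapping.lookup \<alpha> j)" "Poly_Mapping.keys \<alpha>"]
    by auto
  have "mon z ?\<beta> = (\<Prod>i\<in>\<sigma> ` Poly_Mapping.keys \<alpha>. z i powi Poly_Mapping.lookup ?\<beta> i)"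
    by (rule mon_superset[OF _ ks]) simp
  also have "\<dots> = (\<Prod>j\<in>Poly_Mapping.keys \<alpha>. z (\<sigma> j) powi Poly_Mapping.lookup ?\<beta> (\<sigma> j))"
    using assms by (subst prod.reindex) (auto intro: inj_on_subset)
  also have "\<dots> = (\<Prod>j\<in>Poly_Mapping.keys \<alpha>. z (\<sigma> j) powi Poly_Mapping.lookup \<alpha> j)"
    by (simp add: lk)
  finally show ?thesis .
qed

lemma leval_msubst:
  assumes "inj \<sigma>"
  shows "leval z (msubst c \<sigma> f) = leval (\<lambda>j. c j * z (\<sigma> j)) f"
proof -
  have "leval z (msubst c \<sigma> f) = (\<Sum>\<alpha>\<in>Poly_Mapping.keys f. Poly_Mapping.lookup f \<alpha> *
      (\<Prod>j\<in>Poly_Mapping.keys \<alpha>. c j powi Poly_Mapping.lookup \<alpha> j) *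
      (\<Prod>j\<in>Poly_Mapping.keys \<alpha>. z (\<sigma> j) powi Poly_Mapping.lookup \<alpha> j))"
    unfolding msubst_def leval_sum leval_single
    by (rule sum.cong[OF refl], subst mon_push[OF assms], simp)
  also have "\<dots> = leval (\<lambda>j. c j * z (\<sigma> j)) f"
    unfolding leval_mon mon_def
    by (simp add: power_int_mult_distrib prod.distrib mult.assoc)
  finally show ?thesis .
qed

definition tsw :: "nat \<Rightarrow> nat \<Rightarrow> nat" where
  "tsw i j = (if j = i then i + 1 else if j = i + 1 then i else j)"

definition sigO :: "nat \<Rightarrow> nat \<Rightarrow> nat" where
  "sigO n j = (if j = 1 then n else if 2 \<le> j \<and> j \<le> n then j - 1 else j)"

definition sigOi :: "nat \<Rightarrow> nat \<Rightarrow> nat" where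
  "sigOi n j = (if j = n then 1 else if 1 \<le> j \<and> j < n then j + 1 else j)"

definition omegainv :: "'a::field \<Rightarrow> nat \<Rightarrow> 'a laurent \<Rightarrow> 'a laurent" where
  "omegainv q n f = msubst (\<lambda>j. if j = n then inverse q else 1) (sigOi n) f"

lemma inj_tsw: "inj (tsw i)"
  by (auto simp: inj_def tsw_def split: if_splits)

lemma inj_sigO: "n \<ge> 1 \<Longrightarrow> inj (sigO n)"
  by (auto simp: inj_def sigO_def split: if_splits)

lemma inj_sigOi: "n \<ge> 1 \<Longrightarrow> inj (sigOi n)"
  by (auto simp: inj_def sigOi_def split: if_splits)

lemma leval_swp: "leval z (swp i f) = leval (\<lambda>j. z (tsw i j)) f"
proof -
  have "swp i f = msubst (\<lambda>_. 1) (tsw i) f" unfolding swp_def tsw_def ..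
  then show ?thesis using leval_msubst[OF inj_tsw, of z "\<lambda>_. 1" i f] by simp
qed

definition opt :: "'a::field \<Rightarrow> nat \<Rightarrow> (nat \<Rightarrow> 'a) \<Rightarrow> nat \<Rightarrow> 'a" where
  "opt q n z j = (if j = 1 then q else 1) * z (sigO n j)"

definition opti :: "'a::field \<Rightarrow> nat \<Rightarrow> (nat \<Rightarrow> 'a) \<Rightarrow> nat \<Rightarrow> 'a" where
  "opti q n z j = (if j = n then inverse q else 1) * z (sigOi n j)"

lemma leval_omega: "n \<ge> 1 \<Longrightarrow> leval z (omega q n f) = leval (opt q n z) f"
proof -
  assume n: "n \<ge> 1"
  have "omega q n f = msubst (\<lambda>j. if j = 1 then q else 1) (sigO n) f" unfolding omega_def sigO_def ..
  then show ?thesis using leval_msubst[OF inj_sigO[OF n]] by (simp add: opt_def[abs_def])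
qed

lemma leval_omegainv: "n \<ge> 1 \<Longrightarrow> leval z (omegainv q n f) = leval (opti q n z) f"
  unfolding omegainv_def using leval_msubst[OF inj_sigOi] by (simp add: opti_def[abs_def])

lemma opt_opti: "n \<ge> 2 \<Longrightarrow> q \<noteq> 0 \<Longrightarrow> opti q n (opt q n z) = z"
  by (rule ext) (auto simp: opt_def opti_def sigO_def sigOi_def)

lemma opti_opt: "n \<ge> 2 \<Longrightarrow> q \<noteq> 0 \<Longrightarrow> opt q n (opti q n z) = z"
  by (rule ext) (auto simp: opt_def opti_def sigO_def sigOi_def)

lemma laurent_univ:
  fixes c :: "'b \<Rightarrow> 'a::field" and E :: "'b \<Rightarrow> int"
  assumes A: "finite A" and Y: "infinite Y" "0 \<notin> Y"
    and van: "\<forall>y\<in>Y. (\<Sum>\<alpha>\<in>A. c \<alpha> * y powi E \<alpha>) = 0"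
  shows "\<forall>y. y \<noteq> 0 \<longrightarrow> (\<Sum>\<alpha>\<in>A. c \<alpha> * y powi E \<alpha>) = 0"
    and "inj_on E A \<Longrightarrow> \<forall>\<alpha>\<in>A. c \<alpha> = 0"
proof -
  define N where "N = (\<Sum>\<alpha>\<in>A. nat \<bar>E \<alpha>\<bar>)"
  have EN: "E \<alpha> + int N \<ge> 0" if "\<alpha> \<in> A" for \<alpha>
  proof -
    have "nat \<bar>E \<alpha>\<bar> \<le> N" unfolding N_def using A that by (intro member_le_sum) auto
    then show ?thesis by linarith
  qed
  define p where "p = (\<Sum>\<alpha>\<in>A. monom (c \<alpha>) (nat (E \<alpha> + int N)))"
  have pe: "poly p y = y ^ N * (\<Sum>\<alpha>\<in>A. c \<alpha> * y powi E \<alpha>)" if "y \<noteq> 0" for y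
  proof -
    have "poly p y = (\<Sum>\<alpha>\<in>A. c \<alpha> * y ^ nat (E \<alpha> + int N))"
      by (simp add: p_def poly_sum poly_monom)
    also have "\<dots> = (\<Sum>\<alpha>\<in>A. c \<alpha> * (y powi E \<alpha> * y ^ N))"
    proof (rule sum.cong[OF refl])
      fix \<alpha> assume "\<alpha> \<in> A"
      then have "y ^ nat (E \<alpha> + int N) = y powi (E \<alpha> + int N)"
        using EN by (simp add: power_int_def)
      also have "\<dots> = y powi E \<alpha> * y ^ N" using that by (simp add: power_int_add)
      finally show "c \<alpha> * y ^ nat (E \<alpha> + int N) = c \<alpha> * (y powi E \<alpha> * y ^ N)" by simp
    qed
    also have "\<dots> = y ^ N * (\<Sum>\<alpha>\<in>A. c \<alpha> * y powi E \<alpha>)"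
      by (simp add: sum_distrib_left mult_ac)
    finally show ?thesis .
  qed
  have "Y \<subseteq> {x. poly p x = 0}"
  proof
    fix x assume x: "x \<in> Y"
    then have "x \<noteq> 0" using Y(2) by auto
    then show "x \<in> {x. poly p x = 0}" using pe van x by simp
  qed
  then have "infinite {x. poly p x = 0}" using Y(1) finite_subset by blast
  then have p0: "p = 0" using poly_roots_finite by blast
  show "\<forall>y. y \<noteq> 0 \<longrightarrow> (\<Sum>\<alpha>\<in>A. c \<alpha> * y powi E \<alpha>) = 0"
    using pe p0 by auto
  assume inj: "inj_on E A"
  show "\<forall>\<alpha>\<in>A. c \<alpha> = 0"
  proof
    fix \<alpha> assume a: "\<alpha> \<in> A"
    have "coeff p (nat (E \<alpha> + int N)) = (\<Sum>\<beta>\<in>A. if nat (E \<beta> + int N) = nat (E \<alpha> + int N) then c \<beta> else 0)"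
      by (simp add: p_def coeff_sum)
    also have "\<dots> = (\<Sum>\<beta>\<in>A. if \<beta> = \<alpha> then c \<beta> else 0)"
    proof (rule sum.cong[OF refl])
      fix \<beta> assume b: "\<beta> \<in> A"
      have "nat (E \<beta> + int N) = nat (E \<alpha> + int N) \<longleftrightarrow> E \<beta> = E \<alpha>" using EN[OF a] EN[OF b] by auto
      also have "\<dots> \<longleftrightarrow> \<beta> = \<alpha>" using inj a b by (auto dest: inj_onD)
      finally show "(if nat (E \<beta> + int N) = nat (E \<alpha> + int N) then c \<beta> else 0) = (if \<beta> = \<alpha> then c \<beta> else 0)" by simp
    qed
    also have "\<dots> = c \<alpha>" using a A by simp
    finally show "c \<alpha> = 0" using p0 by simp
  qed
qed

lemma digit_bound:
  fixes B :: int and d :: "nat \<Rightarrow> int"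
  assumes "B \<ge> 1" "\<forall>j<L. \<bar>d j\<bar> \<le> B - 1"
  shows "\<bar>\<Sum>j<L. d j * B ^ j\<bar> \<le> B ^ L - 1"
  using assms(2)
proof (induction L)
  case 0 then show ?case by simp
next
  case (Suc L)
  have h1: "\<bar>\<Sum>j<L. d j * B ^ j\<bar> \<le> B ^ L - 1" using Suc by auto
  have h2: "\<bar>d L * B ^ L\<bar> \<le> (B - 1) * B ^ L"
    using Suc.prems assms(1) by (simp add: abs_mult mult_right_mono)
  have "\<bar>\<Sum>j<Suc L. d j * B ^ j\<bar> \<le> \<bar>\<Sum>j<L. d j * B ^ j\<bar> + \<bar>d L * B ^ L\<bar>"
    by simp
  also have "\<dots> \<le> B ^ Suc L - 1" using h1 h2 by (simp add: algebra_simps)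
  finally show ?case .
qed

lemma digits_zero:
  fixes B :: int and d :: "nat \<Rightarrow> int"
  assumes "B \<ge> 2" "\<forall>j<L. \<bar>d j\<bar> \<le> B - 1" "(\<Sum>j<L. d j * B ^ j) = 0"
  shows "\<forall>j<L. d j = 0"
  using assms(2,3)
proof (induction L)
  case 0 then show ?case by simp
next
  case (Suc L)
  have p1: "\<forall>j<L. \<bar>d j\<bar> \<le> B - 1" using Suc.prems(1) by simp
  have b: "\<bar>\<Sum>j<L. d j * B ^ j\<bar> \<le> B ^ L - 1" using assms(1) p1 by (intro digit_bound) auto
  have e: "d L * B ^ L = - (\<Sum>j<L. d j * B ^ j)" using Suc.prems(2) by simp
  have BL: "B ^ L > 0" using assms(1) by simp
  have "d L = 0"
  proof (rule ccontr)
    assume "d L \<noteq> 0"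
    then have "\<bar>d L\<bar> \<ge> 1" by simp
    then have "\<bar>d L\<bar> * B ^ L \<ge> 1 * B ^ L" using BL by (intro mult_right_mono) auto
    then have "\<bar>d L * B ^ L\<bar> \<ge> B ^ L" using BL by (simp add: abs_mult)
    moreover have "\<bar>d L * B ^ L\<bar> = \<bar>\<Sum>j<L. d j * B ^ j\<bar>" using e by simp
    ultimately show False using b by linarith
  qed
  have "(\<Sum>j<L. d j * B ^ j) = 0" using e \<open>d L = 0\<close> by simp
  then have "\<forall>j<L. d j = 0" by (rule Suc.IH[OF p1])
  then show ?case using \<open>d L = 0\<close> less_Suc_eq by auto
qed

lemma A1: fixes y :: "'a::field" and B :: int
  assumes "y \<noteq> 0"
  shows "(\<Prod>j\<in>{..<L}. y powi (e j * B ^ j)) = y powi (\<Sum>j<L. e j * B ^ j)"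
  using assms by (induction L) (simp_all add: power_int_add)
lemma A2: fixes B :: int assumes "B \<ge> 2" "(m::nat) \<ge> 2" "inj (of_nat :: nat \<Rightarrow> 'a::field)"
   "(of_nat m :: 'a) ^ nat (B ^ i) = of_nat m ^ nat (B ^ j)" shows "i = j"
proof -
  have "(of_nat (m ^ nat (B ^ i)) :: 'a) = of_nat (m ^ nat (B ^ j))"
    using assms(4) by (simp only: of_nat_power)
  then have "m ^ nat (B ^ i) = m ^ nat (B ^ j)" by (rule injD[OF assms(3)])
  moreover have "1 < m" using assms(2) by simp
  ultimately have "nat (B ^ i) = nat (B ^ j)" using power_inject_exp by blast
  moreover have "0 \<le> B ^ i" "0 \<le> B ^ j" using assms(1) by simp_all
  ultimately have "B ^ i = B ^ j" by simp
  moreover have "1 < B" using assms(1) by simp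
  ultimately show "i = j" using power_inject_exp by blast
qed

lemma identity_thm:
  fixes f :: "'a::field laurent"
  assumes ofn: "inj (of_nat :: nat \<Rightarrow> 'a)"
    and van: "\<And>z. (\<forall>i. z i \<noteq> 0) \<Longrightarrow> inj z \<Longrightarrow> leval z f = 0"
  shows "f = 0"
proof -
  define A where "A = Poly_Mapping.keys f"
  define V where "V = (\<Union>\<alpha>\<in>A. Poly_Mapping.keys \<alpha>)"
  have finV: "finite V" unfolding V_def A_def by auto
  obtain L where L: "V \<subseteq> {..<L}"
    using finV by (meson finite_nat_iff_bounded)
  define M where "M = (\<Sum>\<alpha>\<in>A. \<Sum>j<L. nat \<bar>Poly_Mapping.lookup \<alpha> j\<bar>)"
  have Mb: "\<bar>Poly_Mapping.lookup \<alpha> j\<bar> \<le> int M" if "\<alpha> \<in> A" "j < L" for \<alpha> j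
  proof -
    have "nat \<bar>Poly_Mapping.lookup \<alpha> j\<bar> \<le> (\<Sum>j<L. nat \<bar>Poly_Mapping.lookup \<alpha> j\<bar>)"
      using that by (intro member_le_sum) auto
    also have "\<dots> \<le> M" unfolding M_def using that by (intro member_le_sum) (auto simp: A_def)
    finally show ?thesis by linarith
  qed
  define B :: int where "B = 2 * int M + 2"
  have B2: "B \<ge> 2" by (simp add: B_def)
  define E where "E \<alpha> = (\<Sum>j<L. Poly_Mapping.lookup \<alpha> j * B ^ j)" for \<alpha>
  have injE: "inj_on E A"
  proof (rule inj_onI)
    fix \<alpha> \<beta> assume a: "\<alpha> \<in> A" and b: "\<beta> \<in> A" and eq: "E \<alpha> = E \<beta>"
    let ?d = "\<lambda>j. Poly_Mapping.lookup \<alpha> j - Poly_Mapping.lookup \<beta> j"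
    have d1: "(\<Sum>j<L. ?d j * B ^ j) = 0" using eq by (simp add: E_def left_diff_distrib sum_subtractf)
    have d2: "\<forall>j<L. \<bar>?d j\<bar> \<le> B - 1"
    proof (intro allI impI)
      fix j assume j: "j < L"
      show "\<bar>?d j\<bar> \<le> B - 1" using Mb[OF a j] Mb[OF b j] unfolding B_def by arith
    qed
    have d0: "\<forall>j<L. ?d j = 0" by (rule digits_zero[OF B2 d2 d1])
    show "\<alpha> = \<beta>"
    proof (rule poly_mapping_eqI)
      fix j
      show "Poly_Mapping.lookup \<alpha> j = Poly_Mapping.lookup \<beta> j"
      proof (cases "j < L")
        case True then show ?thesis using d0 by auto
      next
        case False
        then have "j \<notin> Poly_Mapping.keys \<alpha>" "j \<notin> Poly_Mapping.keys \<beta>" using L a b V_def by auto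
        then show ?thesis by (simp add: in_keys_iff)
      qed
    qed
  qed
  define Y where "Y = (of_nat :: nat \<Rightarrow> 'a) ` {2..}"
  have infY: "infinite Y" unfolding Y_def using ofn
    using finite_imageD[of "of_nat :: nat \<Rightarrow> 'a" "{2..}"] inj_on_subset[OF ofn, of "{2..}"] infinite_Ici[of "2::nat"] by blast
  have Y0: "0 \<notin> Y"
  proof
    assume "0 \<in> Y"
    then obtain m where m: "m \<ge> 2" "of_nat m = (0::'a)" unfolding Y_def by auto
    then have "of_nat m = (of_nat 0 :: 'a)" by simp
    then have "m = 0" by (rule injD[OF ofn])
    with m show False by simp
  qed
  have vanY: "\<forall>y\<in>Y. (\<Sum>\<alpha>\<in>A. Poly_Mapping.lookup f \<alpha> * y powi E \<alpha>) = 0"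
  proof
    fix y assume "y \<in> Y"
    then obtain m where m: "m \<ge> 2" "y = of_nat m" unfolding Y_def by auto
    define z where "z j = y ^ nat (B ^ j)" for j
    have y0: "y \<noteq> 0" using Y0 \<open>y \<in> Y\<close> by auto
    have nz: "\<forall>i. z i \<noteq> 0" using y0 by (simp add: z_def)
    have injz: "inj z"
    proof (rule injI)
      fix i j assume "z i = z j"
      then show "i = j" unfolding z_def m using A2[OF B2 m(1) ofn] by blast
    qed
    have "leval z f = (\<Sum>\<alpha>\<in>A. Poly_Mapping.lookup f \<alpha> * y powi E \<alpha>)"
      unfolding leval_mon A_def
    proof (rule sum.cong[OF refl])
      fix \<alpha> assume a: "\<alpha> \<in> Poly_Mapping.keys f"
      have "mon z \<alpha> = (\<Prod>j\<in>{..<L}. z j powi Poly_Mapping.lookup \<alpha> j)"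
        using a L V_def A_def by (intro mon_superset) auto
      also have "\<dots> = (\<Prod>j\<in>{..<L}. y powi (Poly_Mapping.lookup \<alpha> j * B ^ j))"
      proof (rule prod.cong[OF refl])
        fix j
        have "z j = y powi (B ^ j)" using B2 by (simp add: z_def power_int_def)
        then show "z j powi Poly_Mapping.lookup \<alpha> j = y powi (Poly_Mapping.lookup \<alpha> j * B ^ j)"
          by (simp add: power_int_mult[symmetric] mult.commute)
      qed
      also have "\<dots> = y powi E \<alpha>" unfolding E_def by (rule A1[OF y0])
      finally show "Poly_Mapping.lookup f \<alpha> * mon z \<alpha> = Poly_Mapping.lookup f \<alpha> * y powi E \<alpha>" by simp
    qed
    then show "(\<Sum>\<alpha>\<in>A. Poly_Mapping.lookup f \<alpha> * y powi E \<alpha>) = 0" using van[OF nz injz] by simp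
  qed
  have "\<forall>\<alpha>\<in>A. Poly_Mapping.lookup f \<alpha> = 0"
    using laurent_univ(2)[OF _ infY Y0 vanY injE] A_def by simp
  then have "\<And>\<alpha>. Poly_Mapping.lookup f \<alpha> = 0" unfolding A_def by (metis not_in_keys_iff_lookup_eq_zero)
  then show "f = 0" by (intro poly_mapping_eqI) simp
qed

lemma identity_eq:
  fixes f g :: "'a::field laurent"
  assumes ofn: "inj (of_nat :: nat \<Rightarrow> 'a)"
    and van: "\<And>z. (\<forall>i. z i \<noteq> 0) \<Longrightarrow> inj z \<Longrightarrow> leval z f = leval z g"
  shows "f = g"
  using identity_thm[OF ofn, of "f - g"] van by (simp add: leval_diff)

definition phi :: "complex poly \<Rightarrow> K" where "phi p = Fract p 1"

lemma phi_mult: "phi a * phi b = phi (a * b)" by (simp add: phi_def)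
lemma phi_one: "phi 1 = 1" by (simp add: phi_def fract_collapse)
lemma phi_pow: "phi a ^ n = phi (a ^ n)"
  by (induction n) (simp_all add: phi_one phi_mult)
lemma phi_inj: "phi a = phi b \<longleftrightarrow> a = b" by (simp add: phi_def eq_fract)
lemma phi_zero: "phi 0 = 0" by (simp add: phi_def fract_collapse)

lemma K_ofnat_inj: "inj (of_nat :: nat \<Rightarrow> K)"
proof (rule injI)
  fix a b :: nat assume "(of_nat a :: K) = of_nat b"
  then have "phi (of_nat a) = phi (of_nat b)" by (simp add: phi_def of_nat_fract)
  then have "(of_nat a :: complex poly) = of_nat b" by (simp add: phi_inj)
  then show "a = b" by simp
qed

lemma wvar_phi: "wvar = phi (monom 1 1)"
  by (simp add: wvar_def phi_def monom_altdef)

lemma wvar_pow: "wvar ^ N = phi (monom 1 N)"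
  by (simp add: wvar_phi phi_pow monom_power)

lemma wvar_nz: "wvar \<noteq> 0"
  by (simp add: wvar_phi phi_zero[symmetric] phi_inj)

abbreviation "tauc r \<equiv> cis (2 * pi / real (r - 1))"

lemma tau_phi: "spec_tau r ^ S = phi (monom (tauc r ^ S) 0)"
proof -
  have "spec_tau r = phi (monom (tauc r) 0)" by (simp add: spec_tau_def phi_def monom_0)
  then show ?thesis by (simp add: phi_pow monom_power)
qed

definition sA :: "nat \<Rightarrow> nat \<Rightarrow> nat" where "sA k r = spec_a k r div spec_d k r"
definition sB :: "nat \<Rightarrow> nat \<Rightarrow> nat" where "sB k r = 2 * spec_b k r div spec_d k r"

lemma st_eq: "spec_st k r = wvar ^ sA k r" by (simp add: spec_st_def sA_def)
lemma t_eq: "spec_t k r = wvar ^ (2 * sA k r)" by (simp add: spec_t_def st_eq power_mult[symmetric] mult.commute)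
lemma q_eq: "spec_q k r = spec_tau r * inverse wvar ^ sB k r" by (simp add: spec_q_def sB_def)

lemma st_nz: "spec_st k r \<noteq> 0" using wvar_nz by (simp add: st_eq)
lemma tau_nz: "spec_tau r \<noteq> 0"
  using tau_phi[of r 1] by (simp add: phi_zero[symmetric] phi_inj)
lemma q_nz: "spec_q k r \<noteq> 0" using wvar_nz tau_nz by (simp add: q_eq)

lemma sa_pos: "r \<ge> 2 \<Longrightarrow> spec_a k r \<ge> 1"
proof -
  assume r: "r \<ge> 2"
  have "gcd (k+1) (r-1) \<le> r - 1" using r by (intro gcd_le2_nat) auto
  moreover have "gcd (k+1) (r-1) > 0" by simp
  ultimately show ?thesis unfolding spec_a_def using r by (simp add: div_greater_zero_iff Suc_le_eq)
qed

lemma sA_pos: "r \<ge> 2 \<Longrightarrow> sA k r \<ge> 1"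
proof -
  assume r: "r \<ge> 2"
  have a: "spec_a k r \<ge> 1" by (rule sa_pos[OF r])
  have "spec_d k r dvd spec_a k r" unfolding spec_d_def by simp
  then have "spec_d k r \<le> spec_a k r" using a by (intro dvd_imp_le) auto
  moreover have "spec_d k r > 0" unfolding spec_d_def using a by simp
  ultimately show ?thesis unfolding sA_def by (simp add: div_greater_zero_iff Suc_le_eq)
qed

lemma exps_eq: "r \<ge> 2 \<Longrightarrow> 2 * sA k r * (k + 1) = sB k r * (r - 1)"
proof -
  assume r: "r \<ge> 2"
  define g where "g = gcd (k+1) (r-1)"
  define a where "a = spec_a k r"
  define b where "b = spec_b k r"
  define d where "d = spec_d k r"
  have ag: "a * g = r - 1" unfolding a_def g_def spec_a_def by simp
  have bg: "b * g = k + 1" unfolding b_def g_def spec_b_def by simp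
  have ab: "a * (k + 1) = b * (r - 1)" using ag bg by (metis mult.assoc mult.commute)
  have a1: "a \<ge> 1" unfolding a_def by (rule sa_pos[OF r])
  have d0: "d > 0" unfolding d_def spec_d_def a_def[symmetric] using a1 by simp
  have Ad: "sA k r * d = a" unfolding sA_def a_def d_def spec_d_def by simp
  have Bd: "sB k r * d = 2 * b" unfolding sB_def b_def d_def spec_d_def by simp
  have "2 * sA k r * (k + 1) * d = sB k r * (r - 1) * d"
    using Ad Bd ab by (metis mult.assoc mult.commute mult.left_commute)
  then show ?thesis using d0 by simp
qed

lemma tauc_pow_r: "r \<ge> 2 \<Longrightarrow> tauc r ^ (r - 1) = 1"
proof -
  assume r: "r \<ge> 2"
  have "tauc r ^ (r - 1) = cis (real (r - 1) * (2 * pi / real (r - 1)))" by (rule DeMoivre)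
  also have "real (r - 1) * (2 * pi / real (r - 1)) = 2 * pi" using r by simp
  finally show ?thesis by simp
qed

lemma cycle_id: "r \<ge> 2 \<Longrightarrow> spec_t k r ^ (k + 1) * spec_q k r ^ (r - 1) = 1"
proof -
  assume r: "r \<ge> 2"
  let ?N = "sB k r * (r - 1)"
  have "spec_t k r ^ (k + 1) = wvar ^ (2 * sA k r * (k + 1))"
    by (simp only: t_eq power_mult)
  also have "\<dots> = wvar ^ ?N" by (subst exps_eq[OF r]) (rule refl)
  finally have "spec_t k r ^ (k + 1) = wvar ^ ?N" .
  moreover have "spec_q k r ^ (r - 1) = spec_tau r ^ (r - 1) * inverse wvar ^ ?N"
    by (simp add: q_eq power_mult_distrib power_mult)
  moreover have "spec_tau r ^ (r - 1) = 1"
    using tau_phi[of r "r - 1"] tauc_pow_r[OF r] by (simp add: monom_altdef phi_one pCons_one)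
  ultimately show ?thesis using wvar_nz by (simp add: power_inverse field_simps)
qed

lemma tauc_pow_ne1: "r \<ge> 2 \<Longrightarrow> 0 < S \<Longrightarrow> S < r - 1 \<Longrightarrow> tauc r ^ S \<noteq> 1"
proof
  assume r: "r \<ge> 2" and S: "0 < S" "S < r - 1" and eq: "tauc r ^ S = 1"
  have "tauc r ^ S = cis (real S * (2 * pi / real (r - 1)))" by (rule DeMoivre)
  then have "Re (cis (real S * (2 * pi / real (r - 1)))) = 1" using eq by simp
  then have "cos (real S * (2 * pi / real (r - 1))) = 1" by simp
  then obtain n :: int where n: "real S * (2 * pi / real (r - 1)) = real_of_int n * 2 * pi"
    using cos_one_2pi_int by blast
  define R where "R = real (r - 1)"
  have r1: "R > 0" using r by (simp add: R_def)
  have n': "real S * (2 * pi / R) = real_of_int n * 2 * pi" using n by (simp add: R_def)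
  have "real S * (2 * pi) = real_of_int n * 2 * pi * R"
    using n' r1 by (simp add: field_simps)
  then have "(real S - real_of_int n * R) * (2 * pi) = 0" by (simp add: algebra_simps)
  then have "real S = real_of_int n * R" by simp
  then have "int S = n * int (r - 1)" unfolding R_def by (metis of_int_eq_iff of_int_mult of_int_of_nat_eq)
  moreover have "int S > 0" "int S < int (r - 1)" using S by auto
  ultimately show False
  proof -
    assume a: "int S = n * int (r - 1)" "int S > 0" "int S < int (r - 1)"
    show False
    proof (cases "n \<le> 0")
      case True
      then have "n * int (r - 1) \<le> 0" by (simp add: mult_nonpos_nonneg)
      then show False using a by simp
    next
      case False
      then have "n * int (r - 1) \<ge> 1 * int (r - 1)" by (intro mult_right_mono) auto
      then show False using a by simp
    qed
  qed
qed

lemma tq_ne1: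
  assumes r: "r \<ge> 2" and m: "m \<ge> 1" and S: "S \<le> r - 2"
  shows "spec_t k r ^ m * spec_q k r ^ S \<noteq> 1"
proof
  assume eq: "spec_t k r ^ m * spec_q k r ^ S = 1"
  define X where "X = wvar ^ (2 * sA k r * m)"
  define T where "T = spec_tau r ^ S"
  define Y where "Y = inverse wvar ^ (sB k r * S)"
  define W where "W = wvar ^ (sB k r * S)"
  have YW: "Y * W = 1" unfolding Y_def W_def using wvar_nz by (simp add: power_inverse)
  have tX: "spec_t k r ^ m = X" unfolding X_def by (simp only: t_eq power_mult)
  have qTY: "spec_q k r ^ S = T * Y" unfolding T_def Y_def
    by (simp add: q_eq power_mult_distrib power_mult)
  have "X * (T * Y) = 1" using eq tX qTY by simp
  then have "X * T = W"
  proof -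
    assume h: "X * (T * Y) = 1"
    have "X * T = X * T * (Y * W)" using YW by simp
    also have "\<dots> = (X * (T * Y)) * W" by (simp only: mult_ac)
    also have "\<dots> = W" using h by simp
    finally show ?thesis .
  qed
  then have "wvar ^ (2 * sA k r * m) * spec_tau r ^ S = wvar ^ (sB k r * S)"
    unfolding X_def T_def W_def .
  then have "phi (monom 1 (2 * sA k r * m) * monom (tauc r ^ S) 0) = phi (monom 1 (sB k r * S))"
    by (simp add: wvar_pow tau_phi phi_mult)
  then have "monom (tauc r ^ S) (2 * sA k r * m) = monom 1 (sB k r * S)"
    by (simp add: phi_inj mult_monom)
  then have e1: "tauc r ^ S = 1" and e2: "2 * sA k r * m = sB k r * S"
    by (auto simp: monom_eq_iff')
  have "S = 0"
  proof (rule ccontr)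
    assume "S \<noteq> 0"
    then show False using tauc_pow_ne1[OF r, of S] S r e1 by auto
  qed
  then show False using e2 sA_pos[OF r, of k] m by simp
qed

section \<open>closure of laurentV\<close>

lemma inV_iff: "f \<in> laurentV n \<longleftrightarrow> (\<forall>\<alpha>\<in>Poly_Mapping.keys f. Poly_Mapping.keys \<alpha> \<subseteq> {1..n})"
  by (simp add: laurentV_def)

lemma V_add: "f \<in> laurentV n \<Longrightarrow> g \<in> laurentV n \<Longrightarrow> f + g \<in> laurentV n"
  unfolding inV_iff using keys_add[of f g] by blast

lemma V_uminus: "f \<in> laurentV n \<Longrightarrow> - f \<in> laurentV n"
  unfolding inV_iff by simp

lemma V_diff: "f \<in> laurentV n \<Longrightarrow> g \<in> laurentV n \<Longrightarrow> f - g \<in> laurentV n"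
  using V_add[of f n "-g"] V_uminus[of g n] by simp

lemma V_zero: "0 \<in> laurentV n" unfolding inV_iff by simp

lemma V_single: "Poly_Mapping.keys \<alpha> \<subseteq> {1..n} \<Longrightarrow> Poly_Mapping.single \<alpha> v \<in> laurentV n"
  unfolding inV_iff by simp

lemma V_one: "1 \<in> laurentV n"
  unfolding inV_iff by simp

lemma V_lconst: "lconst c \<in> laurentV n"
  unfolding lconst_def by (rule V_single) simp

lemma V_lvar: "i \<in> {1..n} \<Longrightarrow> lvar i \<in> laurentV n"
  unfolding lvar_def by (rule V_single) (simp add: evec_def)

lemma V_lvar_inv: "i \<in> {1..n} \<Longrightarrow> lvar_inv i \<in> laurentV n"
  unfolding lvar_inv_def by (rule V_single) (simp add: evec_def)

lemma keys_plus_sub: "Poly_Mapping.keys ((\<alpha>::nat \<Rightarrow>\<^sub>0 int) + \<beta>) \<subseteq> Poly_Mapping.keys \<alpha> \<union> Poly_Mapping.keys \<beta>"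
  by (rule keys_add)

lemma V_mult: "f \<in> laurentV n \<Longrightarrow> g \<in> laurentV n \<Longrightarrow> f * g \<in> laurentV n"
  unfolding inV_iff
proof
  fix \<gamma> assume f: "\<forall>\<alpha>\<in>Poly_Mapping.keys f. Poly_Mapping.keys \<alpha> \<subseteq> {1..n}"
    and g: "\<forall>\<alpha>\<in>Poly_Mapping.keys g. Poly_Mapping.keys \<alpha> \<subseteq> {1..n}"
    and c: "\<gamma> \<in> Poly_Mapping.keys (f * g)"
  then obtain a b where "\<gamma> = a + b" "a \<in> Poly_Mapping.keys f" "b \<in> Poly_Mapping.keys g"
    using keys_mult[of f g] by blast
  then show "Poly_Mapping.keys \<gamma> \<subseteq> {1..n}" using f g keys_plus_sub[of a b] by blast
qed

lemma V_sum: "(\<And>x. x \<in> A \<Longrightarrow> F x \<in> laurentV n) \<Longrightarrow> (\<Sum>x\<in>A. F x) \<in> laurentV n"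
  by (induction A rule: infinite_finite_induct) (auto simp: V_zero V_add)

lemma V_power: "f \<in> laurentV n \<Longrightarrow> f ^ N \<in> laurentV n"
  by (induction N) (auto simp: V_one V_mult)

lemma V_msubst:
  assumes "\<forall>j\<in>{1..n}. \<sigma> j \<in> {1..n}" "f \<in> laurentV n"
  shows "msubst c \<sigma> f \<in> laurentV n"
  unfolding msubst_def
proof (rule V_sum, rule V_single)
  fix \<alpha> assume a: "\<alpha> \<in> Poly_Mapping.keys f"
  have "Poly_Mapping.keys (\<Sum>j\<in>Poly_Mapping.keys \<alpha>. Poly_Mapping.single (\<sigma> j) (Poly_Mapping.lookup \<alpha> j))
        \<subseteq> \<sigma> ` Poly_Mapping.keys \<alpha>"
    using keys_sum[of "\<lambda>j. Poly_Mapping.single (\<sigma> j) (Poly_Mapping.lookup \<alpha> j)" "Poly_Mapping.keys \<alpha>"]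
    by auto
  also have "\<dots> \<subseteq> {1..n}" using assms a unfolding inV_iff by blast
  finally show "Poly_Mapping.keys (\<Sum>j\<in>Poly_Mapping.keys \<alpha>. Poly_Mapping.single (\<sigma> j) (Poly_Mapping.lookup \<alpha> j)) \<subseteq> {1..n}" .
qed

lemma V_swp: "1 \<le> i \<Longrightarrow> i + 1 \<le> n \<Longrightarrow> f \<in> laurentV n \<Longrightarrow> swp i f \<in> laurentV n"
  unfolding swp_def by (rule V_msubst) auto

lemma V_omega: "f \<in> laurentV n \<Longrightarrow> omega q n f \<in> laurentV n"
  unfolding omega_def by (rule V_msubst) auto

lemma V_omegainv: "f \<in> laurentV n \<Longrightarrow> omegainv q n f \<in> laurentV n"
  unfolding omegainv_def by (rule V_msubst) (auto simp: sigOi_def)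

lemma leval_power: "\<forall>i. z i \<noteq> 0 \<Longrightarrow> leval z (f ^ N) = leval z f ^ N"
  by (induction N) (simp_all add: leval_mult)

definition uu :: "nat \<Rightarrow> K laurent" where "uu i = lvar i * lvar_inv (i + 1)"
definition uv :: "nat \<Rightarrow> K laurent" where "uv i = lvar (i + 1) * lvar_inv i"

definition GG :: "nat \<Rightarrow> int \<Rightarrow> K laurent" where
  "GG i m = (if 0 \<le> m then (\<Sum>j<nat m. uu i ^ j) else - (uv i * (\<Sum>j<nat (- m). uv i ^ j)))"

definition Dv :: "nat \<Rightarrow> K laurent \<Rightarrow> K laurent" where
  "Dv i f = (\<Sum>\<alpha>\<in>Poly_Mapping.keys f. Poly_Mapping.single \<alpha> (Poly_Mapping.lookup f \<alpha>) *
              GG i (Poly_Mapping.lookup \<alpha> (i + 1) - Poly_Mapping.lookup \<alpha> i))"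

abbreviation "nzp (z :: nat \<Rightarrow> K) \<equiv> \<forall>i. z i \<noteq> 0"

lemma leval_uu: "nzp z \<Longrightarrow> leval z (uu i) = z i / z (i + 1)"
  by (simp add: uu_def leval_mult field_simps)

lemma leval_uv: "nzp z \<Longrightarrow> leval z (uv i) = z (i + 1) / z i"
  by (simp add: uv_def leval_mult field_simps)

lemma leval_GG:
  assumes z: "nzp z"
  shows "(z i / z (i + 1) - 1) * leval z (GG i m) = (z i / z (i + 1)) powi m - 1"
proof -
  let ?r = "z i / z (i + 1)" and ?s = "z (i + 1) / z i"
  have rs: "?r * ?s = 1" using z by (simp add: field_simps)
  show ?thesis
  proof (cases "0 \<le> m")
    case True
    then have "leval z (GG i m) = (\<Sum>j<nat m. ?r ^ j)"
      using z by (simp add: GG_def leval_sum leval_power leval_uu)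
    then show ?thesis using True
      by (simp add: power_diff_1_eq[symmetric] power_int_def)
  next
    case False
    define SS where "SS = (\<Sum>j<nat (- m). ?s ^ j)"
    have L: "leval z (GG i m) = - (?s * SS)"
      using z False unfolding SS_def by (simp add: GG_def leval_sum leval_power leval_uv leval_mult leval_uminus)
    have aux: "\<And>r s S :: K. (r - 1) * (- (s * S)) = (s - r * s) * S" by (simp add: algebra_simps)
    have "(?r - 1) * leval z (GG i m) = (?s - ?r * ?s) * (\<Sum>j<nat (- m). ?s ^ j)"
      unfolding L SS_def by (rule aux)
    also have "\<dots> = (?s - 1) * (\<Sum>j<nat (- m). ?s ^ j)" using rs by simp
    also have "\<dots> = ?s ^ nat (- m) - 1" by (simp add: power_diff_1_eq)
    also have "?s ^ nat (- m) = ?r powi m" using False z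
      by (simp add: power_int_def power_inverse)
    finally show ?thesis .
  qed
qed

lemma mon_tsw:
  assumes z: "nzp z"
  shows "mon (\<lambda>j. z (tsw i j)) \<alpha> = mon z \<alpha> * (z i / z (i + 1)) powi (Poly_Mapping.lookup \<alpha> (i + 1) - Poly_Mapping.lookup \<alpha> i)"
proof -
  let ?S = "Poly_Mapping.keys \<alpha> \<union> {i, i + 1}"
  let ?R = "?S - {i} - {i + 1}"
  let ?a = "Poly_Mapping.lookup \<alpha> i" and ?b = "Poly_Mapping.lookup \<alpha> (i + 1)"
  have fin: "finite ?S" by simp
  have split: "(\<Prod>j\<in>?S. g j) = g i * (g (i + 1) * (\<Prod>j\<in>?R. g j))" for g :: "nat \<Rightarrow> K"
  proof -
    have "(\<Prod>j\<in>?S. g j) = g i * (\<Prod>j\<in>?S - {i}. g j)" by (rule prod.remove) auto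
    also have "(\<Prod>j\<in>?S - {i}. g j) = g (i + 1) * (\<Prod>j\<in>?R. g j)" by (rule prod.remove) auto
    finally show ?thesis .
  qed
  have R: "(\<Prod>j\<in>?R. z (tsw i j) powi Poly_Mapping.lookup \<alpha> j) = (\<Prod>j\<in>?R. z j powi Poly_Mapping.lookup \<alpha> j)"
    by (rule prod.cong) (auto simp: tsw_def)
  have "mon (\<lambda>j. z (tsw i j)) \<alpha> = (\<Prod>j\<in>?S. z (tsw i j) powi Poly_Mapping.lookup \<alpha> j)"
    by (rule mon_superset) auto
  also have "\<dots> = z (i + 1) powi ?a * (z i powi ?b * (\<Prod>j\<in>?R. z j powi Poly_Mapping.lookup \<alpha> j))"
    by (simp only: split R) (simp add: tsw_def)
  finally have L: "mon (\<lambda>j. z (tsw i j)) \<alpha> = z (i + 1) powi ?a * (z i powi ?b * (\<Prod>j\<in>?R. z j powi Poly_Mapping.lookup \<alpha> j))" .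
  have "mon z \<alpha> = (\<Prod>j\<in>?S. z j powi Poly_Mapping.lookup \<alpha> j)"
    by (rule mon_superset) auto
  also have "\<dots> = z i powi ?a * (z (i + 1) powi ?b * (\<Prod>j\<in>?R. z j powi Poly_Mapping.lookup \<alpha> j))"
    by (simp only: split)
  finally have M: "mon z \<alpha> = z i powi ?a * (z (i + 1) powi ?b * (\<Prod>j\<in>?R. z j powi Poly_Mapping.lookup \<alpha> j))" .
  have zi: "z i \<noteq> 0" and zj: "z (i + 1) \<noteq> 0" using z by auto
  have key: "z (i + 1) powi ?a * z i powi ?b = z i powi ?a * z (i + 1) powi ?b * (z i / z (i + 1)) powi (?b - ?a)"
    using zi zj by (simp add: power_int_divide_distrib power_int_diff field_simps)
  show ?thesis unfolding L M using key by (simp add: mult_ac)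
qed

lemma swp_Dv: "(uu i - 1) * Dv i f = swp i f - f"
proof (rule identity_eq[OF K_ofnat_inj])
  fix z :: "nat \<Rightarrow> K" assume z: "nzp z"
  let ?r = "z i / z (i + 1)"
  let ?m = "\<lambda>\<alpha>. Poly_Mapping.lookup \<alpha> (i + 1) - Poly_Mapping.lookup \<alpha> i"
  have "leval z ((uu i - 1) * Dv i f) = (?r - 1) * (\<Sum>\<alpha>\<in>Poly_Mapping.keys f. Poly_Mapping.lookup f \<alpha> * mon z \<alpha> * leval z (GG i (?m \<alpha>)))"
    using z by (simp add: leval_mult leval_diff leval_uu Dv_def leval_sum leval_single)
  also have "\<dots> = (\<Sum>\<alpha>\<in>Poly_Mapping.keys f. Poly_Mapping.lookup f \<alpha> * mon z \<alpha> * ((?r - 1) * leval z (GG i (?m \<alpha>))))"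
    by (simp add: sum_distrib_left mult_ac)
  also have "\<dots> = (\<Sum>\<alpha>\<in>Poly_Mapping.keys f. Poly_Mapping.lookup f \<alpha> * mon z \<alpha> * (?r powi ?m \<alpha> - 1))"
    using leval_GG[OF z] by simp
  also have "\<dots> = (\<Sum>\<alpha>\<in>Poly_Mapping.keys f. Poly_Mapping.lookup f \<alpha> * mon (\<lambda>j. z (tsw i j)) \<alpha>)
                 - (\<Sum>\<alpha>\<in>Poly_Mapping.keys f. Poly_Mapping.lookup f \<alpha> * mon z \<alpha>)"
    using mon_tsw[OF z] by (simp add: sum_subtractf algebra_simps)
  also have "\<dots> = leval z (swp i f - f)"
    by (simp only: leval_diff leval_swp) (simp add: leval_mon)
  finally show "leval z ((uu i - 1) * Dv i f) = leval z (swp i f - f)" .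
qed

lemma K_two_nz: "(2::K) \<noteq> 0"
proof
  assume "(2::K) = 0"
  then have "(of_nat 2 :: K) = of_nat 0" by simp
  then have "(2::nat) = 0" by (rule injD[OF K_ofnat_inj])
  then show False by simp
qed

lemma uu_ne1: "uu i - 1 \<noteq> 0"
proof
  assume h: "uu i - 1 = 0"
  define z :: "nat \<Rightarrow> K" where "z = (\<lambda>j. if j = i then 2 else 1)"
  have z: "nzp z" using K_two_nz by (simp add: z_def)
  have "leval z (uu i - 1) = 1" using z by (simp add: leval_diff leval_uu z_def)
  then show False using h by simp
qed

definition hT :: "K \<Rightarrow> nat \<Rightarrow> K laurent \<Rightarrow> K laurent" where
  "hT st i f = lconst st * swp i f + lconst (st - inverse st) * Dv i f"

lemma hT_eqn: "(uu i - 1) * (hT st i f - lconst st * swp i f) = lconst (st - inverse st) * (swp i f - f)"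
proof -
  have "(uu i - 1) * (hT st i f - lconst st * swp i f) = lconst (st - inverse st) * ((uu i - 1) * Dv i f)"
    by (simp add: hT_def mult_ac)
  then show ?thesis by (simp only: swp_Dv)
qed

lemma heckeT_eq: "heckeT st i f = hT st i f"
  unfolding heckeT_def uu_def[symmetric]
proof (rule the_equality)
  show "(uu i - 1) * (hT st i f - lconst st * swp i f) = lconst (st - inverse st) * (swp i f - f)"
    by (rule hT_eqn)
next
  fix g assume g: "(uu i - 1) * (g - lconst st * swp i f) = lconst (st - inverse st) * (swp i f - f)"
  have "(uu i - 1) * (g - lconst st * swp i f) = (uu i - 1) * (hT st i f - lconst st * swp i f)"
    using g hT_eqn by simp
  then have "g - lconst st * swp i f = hT st i f - lconst st * swp i f"
    using uu_ne1 by simp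
  then show "g = hT st i f" by simp
qed

lemma V_GG: "1 \<le> i \<Longrightarrow> i + 1 \<le> n \<Longrightarrow> GG i m \<in> laurentV n"
  unfolding GG_def uu_def uv_def
  by (auto intro!: V_sum V_power V_mult V_lvar V_lvar_inv V_uminus)

lemma V_Dv: "1 \<le> i \<Longrightarrow> i + 1 \<le> n \<Longrightarrow> f \<in> laurentV n \<Longrightarrow> Dv i f \<in> laurentV n"
  unfolding Dv_def
  by (intro V_sum V_mult V_GG V_single) (auto simp: inV_iff)

lemma V_heckeT: "1 \<le> i \<Longrightarrow> i + 1 \<le> n \<Longrightarrow> f \<in> laurentV n \<Longrightarrow> heckeT (st::K) i f \<in> laurentV n"
  unfolding heckeT_eq hT_def
  by (rule V_add[OF V_mult[OF V_lconst V_swp] V_mult[OF V_lconst V_Dv]])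

lemma heckeT_pt:
  assumes z: "nzp z" and ne: "z i \<noteq> z (i + 1)"
  shows "leval z (heckeT st i f) = st * leval (\<lambda>j. z (tsw i j)) f +
     (st - inverse st) * (leval (\<lambda>j. z (tsw i j)) f - leval z f) / (z i / z (i + 1) - 1)"
proof -
  let ?r = "z i / z (i + 1)"
  have r1: "?r - 1 \<noteq> 0" using ne z by (simp add: field_simps)
  have "leval z ((uu i - 1) * Dv i f) = leval z (swp i f - f)" by (simp add: swp_Dv)
  then have "(?r - 1) * leval z (Dv i f) = leval (\<lambda>j. z (tsw i j)) f - leval z f"
    using z by (simp add: leval_mult leval_diff leval_uu leval_swp)
  then have D: "leval z (Dv i f) = (leval (\<lambda>j. z (tsw i j)) f - leval z f) / (?r - 1)"
    using r1 by (simp add: field_simps)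
  show ?thesis unfolding heckeT_eq hT_def using z D
    by (simp add: leval_add leval_mult leval_swp)
qed

lemma tsw_tsw[simp]: "tsw i (tsw i j) = j" by (simp add: tsw_def)
lemma tsw_i: "tsw i i = i + 1" by (simp add: tsw_def)
lemma tsw_Si: "tsw i (i + 1) = i" by (simp add: tsw_def)

lemma nzp_tsw: "nzp z \<Longrightarrow> nzp (\<lambda>j. z (tsw i j))" by simp

lemma inj_tsw_pt: "inj z \<Longrightarrow> inj (\<lambda>j. z (tsw i j))"
  using inj_tsw[of i] by (simp add: inj_def)

lemma leval_lc: "nzp z \<Longrightarrow> leval z (f - lconst a * g) = leval z f - a * leval z g"
  by (simp add: leval_diff leval_mult)

lemma heckeT_pt2:
  assumes z: "nzp z" and ne: "z i \<noteq> z (i + 1)"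
  shows "leval (\<lambda>j. z (tsw i j)) (heckeT st i f) = st * leval z f +
     (st - inverse st) * (leval z f - leval (\<lambda>j. z (tsw i j)) f) / (z (i + 1) / z i - 1)"
proof -
  have "leval (\<lambda>j. z (tsw i j)) (heckeT st i f) = st * leval (\<lambda>j. z (tsw i (tsw i j))) f +
     (st - inverse st) * (leval (\<lambda>j. z (tsw i (tsw i j))) f - leval (\<lambda>j. z (tsw i j)) f) /
       (z (tsw i i) / z (tsw i (i + 1)) - 1)"
    by (rule heckeT_pt) (use z ne in \<open>auto simp: tsw_def\<close>)
  then show ?thesis by (simp only: tsw_tsw tsw_i tsw_Si)
qed

lemma lin_aux:
  fixes st c d a A1 A2 B1 B2 :: K
  shows "st * (B1 - a * B2) + c * ((B1 - a * B2) - (A1 - a * A2)) / d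
       = (st * B1 + c * (B1 - A1) / d) - a * (st * B2 + c * (B2 - A2) / d)"
  by (simp add: divide_inverse algebra_simps)

lemma heckeT_lin:
  fixes st :: K
  shows "heckeT st i (f - lconst a * g) = heckeT st i f - lconst a * heckeT st i g"
proof (rule identity_eq[OF K_ofnat_inj])
  fix z :: "nat \<Rightarrow> K" assume z: "nzp z" and iz: "inj z"
  have ne: "z i \<noteq> z (i + 1)" using iz by (auto dest: injD)
  have r1: "z i / z (i + 1) - 1 \<noteq> 0" using ne z by (simp add: field_simps)
  show "leval z (heckeT st i (f - lconst a * g)) = leval z (heckeT st i f - lconst a * heckeT st i g)"
    unfolding leval_lc[OF z] heckeT_pt[OF z ne] leval_lc[OF nzp_tsw[OF z]]
    by (rule lin_aux)
qed

lemma field_quad: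
  fixes st r A B :: K
  assumes st: "st \<noteq> 0" and r0: "r \<noteq> 0" and r1: "r \<noteq> 1"
  defines "c \<equiv> st - inverse st"
  defines "T1 \<equiv> st * B + c * (B - A) / (r - 1)"
  defines "T2 \<equiv> st * A + c * (A - B) / (inverse r - 1)"
  shows "st * T2 + c * (T2 - T1) / (r - 1) = c * T1 + A"
proof -
  define D where "D = r - 1"
  define E where "E = (B - A) / D"
  have D0: "D \<noteq> 0" using r1 by (simp add: D_def)
  have DE: "D * E = B - A" using D0 by (simp add: E_def)
  have cs: "c * st = st * st - 1" using st by (simp add: c_def algebra_simps)
  have s1: "T1 = st * B + c * E" by (simp add: T1_def E_def D_def)
  have ir: "inverse r - 1 = - D / r" using r0 by (simp add: D_def field_simps)
  have s2: "c * (A - B) / (inverse r - 1) = c * r * E"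
    unfolding ir E_def using r0 D0 by (simp add: field_simps)
  have s2': "T2 = st * A + c * r * E" using s2 by (simp add: T2_def)
  have s3: "T2 - T1 = D * (E * (c - st))"
  proof -
    have "T2 - T1 = st * (A - B) + c * (r - 1) * E" by (simp add: s1 s2' algebra_simps)
    also have "\<dots> = st * (- (D * E)) + c * D * E" using DE by (simp add: D_def)
    finally show ?thesis by (simp add: algebra_simps)
  qed
  have "st * T2 + c * (T2 - T1) / (r - 1) = st * T2 + c * (E * (c - st))"
    using D0 by (simp add: s3 D_def[symmetric])
  also have "\<dots> = st * st * A + (c * st) * (D * E) + c * c * E"
    by (simp add: s2' D_def algebra_simps)
  also have "\<dots> = st * st * A + (st * st - 1) * (B - A) + c * c * E"
    by (simp only: cs DE)
  also have "\<dots> = (c * st) * B + c * c * E + A"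
    by (simp add: cs algebra_simps)
  also have "\<dots> = c * T1 + A" by (simp add: s1 algebra_simps)
  finally show ?thesis .
qed

lemma heckeT_quad:
  fixes st :: K
  assumes st: "st \<noteq> 0"
  shows "heckeT st i (heckeT st i f) = lconst (st - inverse st) * heckeT st i f + f"
proof (rule identity_eq[OF K_ofnat_inj])
  fix z :: "nat \<Rightarrow> K" assume z: "nzp z" and iz: "inj z"
  have ne: "z i \<noteq> z (i + 1)" using iz by (auto dest: injD)
  show "leval z (heckeT st i (heckeT st i f)) = leval z (lconst (st - inverse st) * heckeT st i f + f)"
  proof -
    let ?r = "z i / z (i + 1)"
    have r0: "?r \<noteq> 0" and r1: "?r \<noteq> 1" using z ne by (auto simp: field_simps)
    have yx: "z (i + 1) / z i = inverse ?r" by simp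
    show ?thesis
      unfolding heckeT_pt[OF z ne, of st "heckeT st i f"] heckeT_pt2[OF z ne] yx
      using field_quad[OF st r0 r1, of "leval z f" "leval (\<lambda>j. z (tsw i j)) f"]
      using z by (simp add: leval_add leval_mult heckeT_pt[OF z ne])
  qed
qed

lemma heckeTinv_eq:
  fixes st :: K
  assumes st: "st \<noteq> 0"
  shows "heckeTinv st i f = heckeT st i f - lconst (st - inverse st) * f"
  unfolding heckeTinv_def
proof (rule the_equality)
  show "heckeT st i (heckeT st i f - lconst (st - inverse st) * f) = f"
    by (simp add: heckeT_lin heckeT_quad[OF st])
next
  fix g assume g: "heckeT st i g = f"
  have "heckeT st i (heckeT st i g) = lconst (st - inverse st) * heckeT st i g + g"
    by (rule heckeT_quad[OF st])
  then show "g = heckeT st i f - lconst (st - inverse st) * f" using g by simp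
qed

lemma heckeT_Tinv: "(st::K) \<noteq> 0 \<Longrightarrow> heckeT st i (heckeTinv st i f) = f"
  by (simp add: heckeTinv_eq heckeT_lin heckeT_quad)

lemma heckeTinv_T: "(st::K) \<noteq> 0 \<Longrightarrow> heckeTinv st i (heckeT st i f) = f"
  by (simp add: heckeTinv_eq heckeT_quad)

definition chainP :: "nat \<Rightarrow> nat \<Rightarrow> nat \<Rightarrow> (nat \<Rightarrow> K) \<Rightarrow> (nat \<Rightarrow> nat) \<Rightarrow> (nat \<Rightarrow> nat) \<Rightarrow> bool" where
  "chainP n k r z ii s \<longleftrightarrow> (\<forall>a\<in>{1..k+1}. ii a \<in> {1..n}) \<and> inj_on ii {1..k+1} \<and>
        (\<forall>a\<in>{1..k}. z (ii (a + 1)) = z (ii a) * spec_t k r * spec_q k r ^ (s a) \<and>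
                     (s a = 0 \<longrightarrow> ii a < ii (a + 1))) \<and>
        (\<Sum>a=1..k. s a) \<le> r - 2"

lemma wheelZ_iff: "z \<in> wheelZ n k r \<longleftrightarrow> (\<forall>j\<in>{1..n}. z j \<noteq> 0) \<and> (\<exists>ii s. chainP n k r z ii s)"
  unfolding wheelZ_def chainP_def by simp

definition znorm :: "nat \<Rightarrow> (nat \<Rightarrow> K) \<Rightarrow> nat \<Rightarrow> K" where
  "znorm n z = (\<lambda>j. if j \<in> {1..n} then z j else 1)"

lemma chainP_cong:
  assumes "\<forall>j\<in>{1..n}. z' j = z j"
  shows "chainP n k r z' ii s \<longleftrightarrow> chainP n k r z ii s"
proof -
  have "(\<forall>a\<in>{1..k+1}. ii a \<in> {1..n}) \<Longrightarrow> (\<forall>a\<in>{1..k}. z' (ii (a + 1)) = z (ii (a + 1)) \<and> z' (ii a) = z (ii a))"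
    using assms by auto
  then show ?thesis unfolding chainP_def by (auto simp del: atLeastAtMost_iff)
qed

lemma znorm_wheel: "z \<in> wheelZ n k r \<Longrightarrow> znorm n z \<in> wheelZ n k r \<and> nzp (znorm n z)"
proof -
  assume z: "z \<in> wheelZ n k r"
  have c: "\<forall>j\<in>{1..n}. znorm n z j = z j" by (simp add: znorm_def)
  obtain ii s where ch: "chainP n k r z ii s" and nz: "\<forall>j\<in>{1..n}. z j \<noteq> 0"
    using z unfolding wheelZ_iff by blast
  have "chainP n k r (znorm n z) ii s" using chainP_cong[OF c, of k r ii s] ch by simp
  moreover have "\<forall>j\<in>{1..n}. znorm n z j \<noteq> 0" using nz c by simp
  moreover have "nzp (znorm n z)" using nz by (simp add: znorm_def)
  ultimately show ?thesis unfolding wheelZ_iff by blast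
qed

lemma leval_znorm: "f \<in> laurentV n \<Longrightarrow> leval (znorm n z) f = leval z f"
  unfolding leval_mon
proof (rule sum.cong[OF refl])
  fix \<alpha> assume f: "f \<in> laurentV n" and a: "\<alpha> \<in> Poly_Mapping.keys f"
  have "Poly_Mapping.keys \<alpha> \<subseteq> {1..n}" using f a by (simp add: inV_iff)
  then have "mon (znorm n z) \<alpha> = mon z \<alpha>" unfolding mon_def
    by (intro prod.cong refl) (auto simp: znorm_def)
  then show "Poly_Mapping.lookup f \<alpha> * mon (znorm n z) \<alpha> = Poly_Mapping.lookup f \<alpha> * mon z \<alpha>" by simp
qed

lemma idealI_intro:
  assumes "g \<in> laurentV n" "\<And>z. z \<in> wheelZ n k r \<Longrightarrow> nzp z \<Longrightarrow> leval z g = 0"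
  shows "g \<in> idealI n k r"
  unfolding idealI_def
proof (intro CollectI conjI ballI)
  show "g \<in> laurentV n" by (rule assms(1))
  fix z assume z: "z \<in> wheelZ n k r"
  then show "leval z g = 0" using znorm_wheel[OF z] assms leval_znorm[of g n z] by metis
qed

lemma idealI_V: "f \<in> idealI n k r \<Longrightarrow> f \<in> laurentV n" by (simp add: idealI_def)
lemma idealI_van: "f \<in> idealI n k r \<Longrightarrow> z \<in> wheelZ n k r \<Longrightarrow> leval z f = 0" by (simp add: idealI_def)

section \<open>chain product\<close>

lemma chain_prod:
  assumes c: "chainP n k r z ii s" and a: "1 \<le> a" and am: "a + m \<le> k + 1"
  shows "z (ii (a + m)) = z (ii a) * spec_t k r ^ m * spec_q k r ^ (\<Sum>c\<in>{a..<a+m}. s c)"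
  using am
proof (induction m)
  case 0 then show ?case by simp
next
  case (Suc m)
  have rel: "z (ii (a + m + 1)) = z (ii (a + m)) * spec_t k r * spec_q k r ^ s (a + m)"
    using c Suc.prems a unfolding chainP_def by auto
  have "z (ii (a + Suc m)) = z (ii a) * spec_t k r ^ m * spec_q k r ^ (\<Sum>c\<in>{a..<a+m}. s c) * spec_t k r * spec_q k r ^ s (a + m)"
    using rel Suc by simp
  also have "\<dots> = z (ii a) * spec_t k r ^ Suc m * spec_q k r ^ (\<Sum>c\<in>{a..<a+Suc m}. s c)"
    by (simp add: power_add mult_ac)
  finally show ?case .
qed

lemma chain_distinct:
  assumes r: "r \<ge> 2" and c: "chainP n k r z ii s" and nz: "\<forall>j\<in>{1..n}. z j \<noteq> 0"
    and ab: "1 \<le> a" "a < b" "b \<le> k + 1"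
  shows "z (ii a) \<noteq> z (ii b)"
proof
  assume eq: "z (ii a) = z (ii b)"
  define m where "m = b - a"
  have bm: "b = a + m" using ab by (simp add: m_def)
  define S where "S = (\<Sum>c\<in>{a..<a+m}. s c)"
  have "z (ii b) = z (ii a) * spec_t k r ^ m * spec_q k r ^ S"
    unfolding bm S_def using chain_prod[OF c ab(1)] ab bm by simp
  moreover have "z (ii a) \<noteq> 0" using c nz ab unfolding chainP_def by auto
  ultimately have "spec_t k r ^ m * spec_q k r ^ S = 1" using eq by (simp add: mult.assoc)
  moreover have "m \<ge> 1" using ab by (simp add: m_def)
  moreover have "S \<le> r - 2"
  proof -
    have "S \<le> (\<Sum>c=1..k. s c)" unfolding S_def using ab bm by (intro sum_mono2) auto
    then show ?thesis using c unfolding chainP_def by simp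
  qed
  ultimately show False using tq_ne1[OF r] by blast
qed

lemma chain_not_both:
  assumes r: "r \<ge> 2" and c: "chainP n k r z ii s" and nz: "\<forall>j\<in>{1..n}. z j \<noteq> 0"
    and eq: "z i = z (i + 1)"
  shows "i \<notin> ii ` {1..k+1} \<or> i + 1 \<notin> ii ` {1..k+1}"
proof (rule ccontr)
  assume "\<not> ?thesis"
  then obtain a b where a: "a \<in> {1..k+1}" "ii a = i" and b: "b \<in> {1..k+1}" "ii b = i + 1" by auto
  have "a \<noteq> b" using a b by auto
  then show False
  proof (cases "a < b")
    case True then show ?thesis using chain_distinct[OF r c nz, of a b] a b eq by auto
  next
    case False then show ?thesis using chain_distinct[OF r c nz, of b a] a b eq \<open>a \<noteq> b\<close> by auto
  qed
qed

section \<open>swap and perturbation\<close>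

lemma chain_swap:
  assumes c: "chainP n k r z ii s" and i: "1 \<le> i" "i + 1 \<le> n"
    and nv: "\<not> (\<exists>a\<in>{1..k}. ii a = i \<and> ii (a + 1) = i + 1 \<and> s a = 0)"
  shows "chainP n k r (\<lambda>j. z (tsw i j)) (\<lambda>a. tsw i (ii a)) s"
  unfolding chainP_def
proof (intro conjI ballI)
  fix a assume "a \<in> {1..k+1}"
  then show "tsw i (ii a) \<in> {1..n}" using c i unfolding chainP_def by (auto simp: tsw_def)
next
  show "inj_on (\<lambda>a. tsw i (ii a)) {1..k+1}"
    using c inj_tsw[of i] unfolding chainP_def by (auto simp: inj_on_def inj_def)
next
  fix a assume a: "a \<in> {1..k}"
  show "z (tsw i (tsw i (ii (a + 1)))) = z (tsw i (tsw i (ii a))) * spec_t k r * spec_q k r ^ s a"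
    using c a unfolding chainP_def by simp
  show "s a = 0 \<longrightarrow> tsw i (ii a) < tsw i (ii (a + 1))"
  proof
    assume s0: "s a = 0"
    then have lt: "ii a < ii (a + 1)" using c a unfolding chainP_def by auto
    have "\<not> (ii a = i \<and> ii (a + 1) = i + 1)" using nv a s0 by auto
    then show "tsw i (ii a) < tsw i (ii (a + 1))" using lt by (auto simp: tsw_def)
  qed
next
  show "(\<Sum>a=1..k. s a) \<le> r - 2" using c unfolding chainP_def by simp
qed

lemma chain_upd:
  assumes c: "chainP n k r z ii s" and j: "j \<notin> ii ` {1..k+1}"
  shows "chainP n k r (z(j := y)) ii s"
proof -
  have "\<forall>a\<in>{1..k}. (z(j := y)) (ii (a + 1)) = z (ii (a + 1)) \<and> (z(j := y)) (ii a) = z (ii a)"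
    using j by auto
  then show ?thesis using c unfolding chainP_def by auto
qed

definition rho :: "nat \<Rightarrow> nat \<Rightarrow> nat" where "rho n j = (if j = n then 1 else j + 1)"
definition lam :: "nat \<Rightarrow> nat \<Rightarrow> nat" where "lam n j = (if j = 1 then n else j - 1)"

lemma opt_rho: "n \<ge> 2 \<Longrightarrow> 1 \<le> j \<Longrightarrow> j < n \<Longrightarrow> opt q n z (rho n j) = z j"
  by (simp add: opt_def rho_def sigO_def)

lemma opt_rho_n: "n \<ge> 2 \<Longrightarrow> opt q n z (rho n n) = q * z n"
  by (simp add: opt_def rho_def sigO_def)

lemma opti_lam: "n \<ge> 2 \<Longrightarrow> 2 \<le> j \<Longrightarrow> j \<le> n \<Longrightarrow> opti q n z (lam n j) = z j"
proof -
  assume j: "2 \<le> j" "j \<le> n"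
  have l: "lam n j = j - 1" using j by (simp add: lam_def)
  have h: "j - 1 \<noteq> n" "1 \<le> j - 1" "j - 1 < n" "j - 1 + 1 = j" using j by auto
  have s: "sigOi n (j - 1) = j" unfolding sigOi_def using h by presburger
  show ?thesis unfolding opti_def l s using h(1) by simp
qed

lemma opti_lam_1: "n \<ge> 2 \<Longrightarrow> opti q n z (lam n 1) = inverse q * z 1"
  by (simp add: opti_def lam_def sigOi_def)

lemma sum_SA:
  fixes s :: "nat \<Rightarrow> nat"
  shows "k \<ge> 1 \<Longrightarrow> (\<Sum>a=1..k. if a = 1 then X else s (a - 1)) = X + (\<Sum>a=1..k-1. s a)"
proof (induction k)
  case 0 then show ?case by simp
next
  case (Suc k)
  show ?case
  proof (cases "k = 0")
    case True then show ?thesis by simp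
  next
    case False
    then have "(\<Sum>a=1..Suc k. if a = 1 then X else s (a - 1)) = X + (\<Sum>a=1..k-1. s a) + s k"
      using Suc by simp
    also have "\<dots> = X + (\<Sum>a=1..Suc k - 1. s a)" using False
      by (cases k) (simp_all add: add.assoc)
    finally show ?thesis .
  qed
qed

lemma sum_shift1:
  fixes s :: "nat \<Rightarrow> nat"
  shows "(\<Sum>a=1..m. s (a + 1)) = (\<Sum>a=2..m+1. s a)"
  by (induction m) simp_all

lemma sum_SB:
  fixes s :: "nat \<Rightarrow> nat"
  assumes "k \<ge> 1"
  shows "(\<Sum>a=1..k. if a = k then X else s (a + 1)) = X + (\<Sum>a=2..k. s a)"
proof -
  obtain m where m: "k = Suc m" using assms by (cases k) auto
  have "(\<Sum>a=1..k. if a = k then X else s (a + 1)) = (\<Sum>a=1..m. if a = k then X else s (a + 1)) + X"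
    using m by simp
  also have "(\<Sum>a=1..m. if a = k then X else s (a + 1)) = (\<Sum>a=1..m. s (a + 1))"
    using m by (intro sum.cong) auto
  also have "\<dots> = (\<Sum>a=2..k. s a)" using m sum_shift1[of s m] by simp
  finally show ?thesis by simp
qed

lemma sum_bump:
  fixes s :: "nat \<Rightarrow> nat"
  assumes A: "finite A" and c: "c \<in> A" and sc: "s c \<ge> 1" and dc: "d \<noteq> c"
  shows "(\<Sum>a\<in>A. if a = c then s a - 1 else if a = d then s a + 1 else s a) \<le> (\<Sum>a\<in>A. s a)"
proof -
  let ?g = "\<lambda>a. if a = c then s a - 1 else if a = d then s a + 1 else s a"
  have pw: "?g a + (if a = c then 1 else 0) = s a + (if a = d then 1 else 0)" for a
    using sc dc by auto
  have "(\<Sum>a\<in>A. ?g a) + (\<Sum>a\<in>A. (if a = c then 1 else 0::nat)) = (\<Sum>a\<in>A. s a) + (\<Sum>a\<in>A. (if a = d then 1 else 0::nat))"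
    unfolding sum.distrib[symmetric] using pw by simp
  moreover have "(\<Sum>a\<in>A. (if a = c then 1 else 0::nat)) = 1" using A c by simp
  moreover have "(\<Sum>a\<in>A. (if a = d then 1 else 0::nat)) \<le> 1" using A by (simp add: sum.delta)
  ultimately show ?thesis by linarith
qed

section \<open>omega\<close>

lemma omega_caseA:
  assumes n: "n \<ge> 2" and c: "chainP n k r z ii s" and nn: "n \<notin> ii ` {1..k+1}"
  shows "chainP n k r (opt q n z) (\<lambda>a. rho n (ii a)) s"
proof -
  have rng: "\<forall>a\<in>{1..k+1}. ii a \<in> {1..n}" and inj: "inj_on ii {1..k+1}"
    and rel: "\<forall>a\<in>{1..k}. z (ii (a + 1)) = z (ii a) * spec_t k r * spec_q k r ^ (s a) \<and> (s a = 0 \<longrightarrow> ii a < ii (a + 1))"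
    and sm: "(\<Sum>a=1..k. s a) \<le> r - 2"
    using c unfolding chainP_def by auto
  have lt: "a \<in> {1..k+1} \<Longrightarrow> 1 \<le> ii a \<and> ii a < n" for a using rng nn by force
  have rv: "a \<in> {1..k+1} \<Longrightarrow> rho n (ii a) = ii a + 1" for a using lt by (auto simp: rho_def)
  show ?thesis unfolding chainP_def
  proof (intro conjI ballI)
    fix a assume "a \<in> {1..k+1}" then show "rho n (ii a) \<in> {1..n}" using lt rv by force
  next
    show "inj_on (\<lambda>a. rho n (ii a)) {1..k+1}" using inj rv by (auto simp: inj_on_def)
  next
    fix a assume a: "a \<in> {1..k}"
    have a1: "a \<in> {1..k+1}" "a + 1 \<in> {1..k+1}" using a by auto
    have o1: "opt q n z (rho n (ii (a + 1))) = z (ii (a + 1))" using lt[OF a1(2)] by (intro opt_rho[OF n]) auto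
    have o2: "opt q n z (rho n (ii a)) = z (ii a)" using lt[OF a1(1)] by (intro opt_rho[OF n]) auto
    show "opt q n z (rho n (ii (a + 1))) = opt q n z (rho n (ii a)) * spec_t k r * spec_q k r ^ s a"
      unfolding o1 o2 using rel a by simp
    show "s a = 0 \<longrightarrow> rho n (ii a) < rho n (ii (a + 1))" using rel a rv[OF a1(1)] rv[OF a1(2)] by simp
  next
    show "(\<Sum>a=1..k. s a) \<le> r - 2" by (rule sm)
  qed
qed

lemma omega_caseB:
  assumes n: "n \<ge> 2" and c: "chainP n k r z ii s" and cc: "cc \<in> {1..k}" and iic: "ii cc = n"
  shows "chainP n k r (opt (spec_q k r) n z) (\<lambda>a. rho n (ii a))
           (\<lambda>a. if a = cc then s a - 1 else if a = cc - 1 then s a + 1 else s a)"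
proof -
  let ?q = "spec_q k r" and ?t = "spec_t k r"
  let ?s = "\<lambda>a. if a = cc then s a - 1 else if a = cc - 1 then s a + 1 else s a"
  let ?w = "opt ?q n z"
  have rng: "\<forall>a\<in>{1..k+1}. ii a \<in> {1..n}" and inj: "inj_on ii {1..k+1}"
    and rel: "\<forall>a\<in>{1..k}. z (ii (a + 1)) = z (ii a) * ?t * ?q ^ (s a) \<and> (s a = 0 \<longrightarrow> ii a < ii (a + 1))"
    and sm: "(\<Sum>a=1..k. s a) \<le> r - 2"
    using c unfolding chainP_def by auto
  have ne: "ii a \<noteq> n" if a: "a \<in> {1..k+1}" "a \<noteq> cc" for a
  proof
    assume "ii a = n"
    then have "ii a = ii cc" using iic by simp
    then have "a = cc" using inj a(1) cc by (auto dest: inj_onD)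
    then show False using a(2) by simp
  qed
  have lt: "a \<in> {1..k+1} \<Longrightarrow> a \<noteq> cc \<Longrightarrow> 1 \<le> ii a \<and> ii a < n" for a
    using rng ne by force
  have rv: "a \<in> {1..k+1} \<Longrightarrow> a \<noteq> cc \<Longrightarrow> rho n (ii a) = ii a + 1" for a
    using ne by (simp add: rho_def)
  have rc: "rho n (ii cc) = 1" using iic by (simp add: rho_def)
  have wv: "?w (rho n (ii a)) = z (ii a)" if "a \<in> {1..k+1}" "a \<noteq> cc" for a
    using lt[OF that] by (intro opt_rho[OF n]) auto
  have wc: "?w (rho n (ii cc)) = ?q * z n" using iic opt_rho_n[OF n] by simp
  have scpos: "s cc \<ge> 1"
  proof (rule ccontr)
    assume "\<not> s cc \<ge> 1"
    then have "ii cc < ii (cc + 1)" using rel cc by auto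
    moreover have "ii (cc + 1) \<le> n" using rng cc by auto
    ultimately show False using iic by simp
  qed
  have R1: "\<forall>a\<in>{1..k+1}. rho n (ii a) \<in> {1..n}"
  proof
    fix a assume a: "a \<in> {1..k+1}"
    show "rho n (ii a) \<in> {1..n}"
    proof (cases "a = cc")
      case True then show ?thesis using rc n by simp
    next
      case False then show ?thesis using rv[OF a False] lt[OF a False] by simp
    qed
  qed
  have R2: "inj_on (\<lambda>a. rho n (ii a)) {1..k+1}"
  proof (rule inj_onI)
    fix a b assume a: "a \<in> {1..k+1}" and b: "b \<in> {1..k+1}" and e: "rho n (ii a) = rho n (ii b)"
    have "ii a = ii b"
    proof (cases "a = cc")
      case True
      show ?thesis
      proof (cases "b = cc")
        case True then show ?thesis using \<open>a = cc\<close> by simp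
      next
        case False then show ?thesis using e rv[OF b False] lt[OF b False] rc \<open>a = cc\<close> by simp
      qed
    next
      case False
      show ?thesis
      proof (cases "b = cc")
        case True then show ?thesis using e rv[OF a False] lt[OF a False] rc by simp
      next
        case bF: False then show ?thesis using e rv[OF a False] rv[OF b bF] by simp
      qed
    qed
    then show "a = b" using inj a b by (auto dest: inj_onD)
  qed
  have R3: "\<forall>a\<in>{1..k}. ?w (rho n (ii (a + 1))) = ?w (rho n (ii a)) * ?t * ?q ^ ?s a
          \<and> (?s a = 0 \<longrightarrow> rho n (ii a) < rho n (ii (a + 1)))"
  proof
    fix a assume a: "a \<in> {1..k}"
    have a1: "a \<in> {1..k+1}" "a + 1 \<in> {1..k+1}" using a by auto
    have ra: "z (ii (a + 1)) = z (ii a) * ?t * ?q ^ (s a)" and oa: "s a = 0 \<longrightarrow> ii a < ii (a + 1)"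
      using rel a by auto
    show "?w (rho n (ii (a + 1))) = ?w (rho n (ii a)) * ?t * ?q ^ ?s a
          \<and> (?s a = 0 \<longrightarrow> rho n (ii a) < rho n (ii (a + 1)))"
    proof (cases "a = cc")
      case True
      have a1c: "a + 1 \<noteq> cc" using True by simp
      have sa: "?s a = s a - 1" using True by simp
      have pw: "?q ^ s a = ?q * ?q ^ (s a - 1)" using scpos True by (cases "s a") auto
      have e1: "?w (rho n (ii (a + 1))) = z (ii (a + 1))" by (rule wv[OF a1(2) a1c])
      have e2: "?w (rho n (ii a)) = ?q * z n" using wc True by simp
      have "z (ii (a + 1)) = (?q * z n) * ?t * ?q ^ (s a - 1)"
        using ra True iic pw by (simp add: mult_ac)
      then have eq: "?w (rho n (ii (a + 1))) = ?w (rho n (ii a)) * ?t * ?q ^ ?s a"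
        unfolding e1 e2 sa .
      have "rho n (ii a) < rho n (ii (a + 1))"
        using True rc rv[OF a1(2) a1c] lt[OF a1(2) a1c] by simp
      then show ?thesis using eq by simp
    next
      case False
      note aF = False
      have e2: "?w (rho n (ii a)) = z (ii a)" by (rule wv[OF a1(1) aF])
      show ?thesis
      proof (cases "a + 1 = cc")
        case True
        have sa: "?s a = s a + 1" using True aF by auto
        have e1: "?w (rho n (ii (a + 1))) = ?q * z n" using wc True by simp
        have "?q * z n = z (ii a) * ?t * ?q ^ (s a + 1)"
          using ra True iic by (simp add: mult_ac)
        then have eq: "?w (rho n (ii (a + 1))) = ?w (rho n (ii a)) * ?t * ?q ^ ?s a"
          unfolding e1 e2 sa .
        then show ?thesis using sa by simp
      next
        case False
        have sa: "?s a = s a" using False aF by auto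
        have e1: "?w (rho n (ii (a + 1))) = z (ii (a + 1))" by (rule wv[OF a1(2) False])
        have eq: "?w (rho n (ii (a + 1))) = ?w (rho n (ii a)) * ?t * ?q ^ ?s a"
          unfolding e1 e2 sa by (rule ra)
        have "?s a = 0 \<longrightarrow> rho n (ii a) < rho n (ii (a + 1))"
          using oa sa rv[OF a1(1) aF] rv[OF a1(2) False] by simp
        then show ?thesis using eq by simp
      qed
    qed
  qed
  have "(\<Sum>a=1..k. ?s a) \<le> (\<Sum>a=1..k. s a)"
    using cc scpos by (intro sum_bump) auto
  then have R4: "(\<Sum>a=1..k. ?s a) \<le> r - 2" using sm by simp
  show ?thesis unfolding chainP_def using R1 R2 R3 R4 by blast
qed

lemma opt_1: "n \<ge> 2 \<Longrightarrow> opt q n z 1 = q * z n"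
  by (simp add: opt_def sigO_def)

lemma omega_caseC:
  assumes n: "n \<ge> 2" and r: "r \<ge> 2" and k: "k \<ge> 1" and c: "chainP n k r z ii s" and iic: "ii (k + 1) = n"
  shows "chainP n k r (opt (spec_q k r) n z) (\<lambda>a. if a = 1 then 1 else rho n (ii (a - 1)))
           (\<lambda>a. if a = 1 then r - 2 - (\<Sum>a=1..k. s a) else s (a - 1))"
proof -
  let ?q = "spec_q k r" and ?t = "spec_t k r"
  define S where "S = (\<Sum>a=1..k. s a)"
  let ?s = "\<lambda>a. if a = 1 then r - 2 - S else s (a - 1)"
  let ?ii = "\<lambda>a. if a = 1 then 1 else rho n (ii (a - 1))"
  let ?w = "opt ?q n z"
  have rng: "\<forall>a\<in>{1..k+1}. ii a \<in> {1..n}" and inj: "inj_on ii {1..k+1}"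
    and rel: "\<forall>a\<in>{1..k}. z (ii (a + 1)) = z (ii a) * ?t * ?q ^ (s a) \<and> (s a = 0 \<longrightarrow> ii a < ii (a + 1))"
    and sm: "S \<le> r - 2"
    using c unfolding chainP_def S_def by auto
  have ne: "ii a \<noteq> n" if a: "a \<in> {1..k}" for a
  proof
    assume "ii a = n"
    then have "ii a = ii (k + 1)" using iic by simp
    then have "a = k + 1" using inj a by (auto dest: inj_onD)
    then show False using a by simp
  qed
  have lt: "a \<in> {1..k} \<Longrightarrow> 1 \<le> ii a \<and> ii a < n" for a
    using rng ne by force
  have rv: "a \<in> {1..k} \<Longrightarrow> rho n (ii a) = ii a + 1" for a
    using ne by (simp add: rho_def)
  have wv: "?w (rho n (ii a)) = z (ii a)" if "a \<in> {1..k}" for a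
    using lt[OF that] by (intro opt_rho[OF n]) auto
  have R1: "\<forall>a\<in>{1..k+1}. ?ii a \<in> {1..n}"
  proof
    fix a assume a: "a \<in> {1..k+1}"
    show "?ii a \<in> {1..n}"
    proof (cases "a = 1")
      case True then show ?thesis using n by simp
    next
      case False
      then have "a - 1 \<in> {1..k}" using a by auto
      then show ?thesis using False rv lt by force
    qed
  qed
  have R2: "inj_on ?ii {1..k+1}"
  proof (rule inj_onI)
    fix a b assume a: "a \<in> {1..k+1}" and b: "b \<in> {1..k+1}" and e: "?ii a = ?ii b"
    show "a = b"
    proof (cases "a = 1")
      case True
      show ?thesis
      proof (cases "b = 1")
        case True then show ?thesis using \<open>a = 1\<close> by simp
      next
        case False
        then have "b - 1 \<in> {1..k}" using b by auto
        then show ?thesis using e False \<open>a = 1\<close> rv lt by force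
      qed
    next
      case False
      then have a': "a - 1 \<in> {1..k}" using a by auto
      show ?thesis
      proof (cases "b = 1")
        case True then show ?thesis using e False a' rv lt by force
      next
        case bF: False
        then have b': "b - 1 \<in> {1..k}" using b by auto
        have "ii (a - 1) = ii (b - 1)" using e False bF rv[OF a'] rv[OF b'] by simp
        then have "a - 1 = b - 1" using inj a' b' by (auto dest: inj_onD)
        then show ?thesis using False bF a b by simp
      qed
    qed
  qed
  have cp: "z n = z (ii 1) * ?t ^ k * ?q ^ S"
  proof -
    have h: "z (ii (1 + k)) = z (ii 1) * ?t ^ k * ?q ^ (\<Sum>c\<in>{1..<1+k}. s c)"
      by (rule chain_prod[OF c]) auto
    have st: "{1..<1+k} = {1..k}" by auto
    have "1 + k = k + 1" by simp
    then have "z (ii (k + 1)) = z (ii 1) * ?t ^ k * ?q ^ S" using h unfolding st S_def by metis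
    then show ?thesis using iic by simp
  qed
  have R3: "\<forall>a\<in>{1..k}. ?w (?ii (a + 1)) = ?w (?ii a) * ?t * ?q ^ ?s a
          \<and> (?s a = 0 \<longrightarrow> ?ii a < ?ii (a + 1))"
  proof
    fix a assume a: "a \<in> {1..k}"
    show "?w (?ii (a + 1)) = ?w (?ii a) * ?t * ?q ^ ?s a \<and> (?s a = 0 \<longrightarrow> ?ii a < ?ii (a + 1))"
    proof (cases "a = 1")
      case True
      have k1: "1 \<in> {1..k}" using k by simp
      have e1: "?w (?ii (a + 1)) = z (ii 1)" using True wv[OF k1] by simp
      have e2: "?w (?ii a) = ?q * z n" using True opt_1[OF n] by simp
      have sa: "?s a = r - 2 - S" using True by simp
      have ee: "r - 1 = 1 + S + (r - 2 - S)" using sm r by simp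
      have qq: "?q * ?q ^ S * ?q ^ (r - 2 - S) = ?q ^ (r - 1)"
        unfolding ee by (simp only: power_add power_one_right)
      have "?q * z n * ?t * ?q ^ (r - 2 - S) = z (ii 1) * (?t ^ (k + 1) * (?q * ?q ^ S * ?q ^ (r - 2 - S)))"
        unfolding cp by (simp add: mult_ac)
      also have "\<dots> = z (ii 1)" unfolding qq cycle_id[OF r] by simp
      finally have eq: "?w (?ii (a + 1)) = ?w (?ii a) * ?t * ?q ^ ?s a" unfolding e1 e2 sa by simp
      have "?ii a < ?ii (a + 1)" using True rv[OF k1] lt[OF k1] by simp
      then show ?thesis using eq by simp
    next
      case False
      have a': "a - 1 \<in> {1..k}" using a False by auto
      have aa: "a - 1 + 1 = a" using a by simp
      have e1: "?w (?ii (a + 1)) = z (ii a)" using wv[OF a] a by simp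
      have e2: "?w (?ii a) = z (ii (a - 1))" using wv[OF a'] False by simp
      have sa: "?s a = s (a - 1)" using False by simp
      have ra: "z (ii a) = z (ii (a - 1)) * ?t * ?q ^ s (a - 1)" and oa: "s (a - 1) = 0 \<longrightarrow> ii (a - 1) < ii a"
        using rel a' aa by (metis)+
      have eq: "?w (?ii (a + 1)) = ?w (?ii a) * ?t * ?q ^ ?s a" unfolding e1 e2 sa by (rule ra)
      have "?s a = 0 \<longrightarrow> ?ii a < ?ii (a + 1)" using oa sa False rv[OF a] rv[OF a'] a by simp
      then show ?thesis using eq by simp
    qed
  qed
  have "(\<Sum>a=1..k. ?s a) = (r - 2 - S) + (\<Sum>a=1..k-1. s a)" by (rule sum_SA[OF k])
  moreover have "(\<Sum>a=1..k-1. s a) \<le> S" unfolding S_def by (intro sum_mono2) auto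
  ultimately have R4: "(\<Sum>a=1..k. ?s a) \<le> r - 2" using sm by simp
  show ?thesis unfolding chainP_def S_def[symmetric] using R1 R2 R3 R4 by blast
qed

lemma omega_wheel:
  assumes n: "n \<ge> 2" and r: "r \<ge> 2" and k: "k \<ge> 1" and z: "z \<in> wheelZ n k r"
  shows "opt (spec_q k r) n z \<in> wheelZ n k r"
proof -
  obtain ii s where c: "chainP n k r z ii s" and nz: "\<forall>j\<in>{1..n}. z j \<noteq> 0"
    using z unfolding wheelZ_iff by blast
  have nz': "\<forall>j\<in>{1..n}. opt (spec_q k r) n z j \<noteq> 0"
  proof
    fix j assume j: "j \<in> {1..n}"
    show "opt (spec_q k r) n z j \<noteq> 0"
    proof (cases "j = 1")
      case True
      have "opt (spec_q k r) n z 1 = spec_q k r * z n" by (rule opt_1[OF n])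
      then show ?thesis using nz n q_nz[of k r] True by simp
    next
      case False
      then have "opt (spec_q k r) n z j = z (j - 1)" using j by (simp add: opt_def sigO_def)
      moreover have "j - 1 \<in> {1..n}" using j False by auto
      ultimately show ?thesis using nz by simp
    qed
  qed
  have "\<exists>ii' s'. chainP n k r (opt (spec_q k r) n z) ii' s'"
  proof (cases "n \<in> ii ` {1..k+1}")
    case False then show ?thesis using omega_caseA[OF n c False] by blast
  next
    case True
    then obtain cc where cc: "cc \<in> {1..k+1}" "ii cc = n" by auto
    show ?thesis
    proof (cases "cc = k + 1")
      case True then show ?thesis using omega_caseC[OF n r k c] cc by blast
    next
      case False
      then have "cc \<in> {1..k}" using cc by auto
      then show ?thesis using omega_caseB[OF n c _ cc(2)] by blast
    qed
  qed
  then show ?thesis using nz' unfolding wheelZ_iff by blast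
qed

lemma omegai_caseA:
  assumes n: "n \<ge> 2" and c: "chainP n k r z ii s" and nn: "1 \<notin> ii ` {1..k+1}"
  shows "chainP n k r (opti q n z) (\<lambda>a. lam n (ii a)) s"
proof -
  have rng: "\<forall>a\<in>{1..k+1}. ii a \<in> {1..n}" and inj: "inj_on ii {1..k+1}"
    and rel: "\<forall>a\<in>{1..k}. z (ii (a + 1)) = z (ii a) * spec_t k r * spec_q k r ^ (s a) \<and> (s a = 0 \<longrightarrow> ii a < ii (a + 1))"
    and sm: "(\<Sum>a=1..k. s a) \<le> r - 2"
    using c unfolding chainP_def by auto
  have lt: "a \<in> {1..k+1} \<Longrightarrow> 2 \<le> ii a \<and> ii a \<le> n" for a using rng nn by force
  have rv: "lam n (ii a) = ii a - 1" if "a \<in> {1..k+1}" for a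
  proof -
    have "ii a \<noteq> 1" using lt[OF that] by simp
    then show ?thesis by (simp add: lam_def)
  qed
  have wv: "opti q n z (lam n (ii a)) = z (ii a)" if "a \<in> {1..k+1}" for a
    using lt[OF that] by (intro opti_lam[OF n]) auto
  have R1: "\<forall>a\<in>{1..k+1}. lam n (ii a) \<in> {1..n}" using lt rv by force
  have R2: "inj_on (\<lambda>a. lam n (ii a)) {1..k+1}"
  proof (rule inj_onI)
    fix a b assume a: "a \<in> {1..k+1}" and b: "b \<in> {1..k+1}" and e: "lam n (ii a) = lam n (ii b)"
    have "ii a - 1 = ii b - 1" using e rv[OF a] rv[OF b] by simp
    then have "ii a = ii b" using lt[OF a] lt[OF b] by linarith
    then show "a = b" using inj a b by (auto dest: inj_onD)
  qed
  have R3: "\<forall>a\<in>{1..k}. opti q n z (lam n (ii (a + 1))) = opti q n z (lam n (ii a)) * spec_t k r * spec_q k r ^ s a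
     \<and> (s a = 0 \<longrightarrow> lam n (ii a) < lam n (ii (a + 1)))"
  proof
    fix a assume a: "a \<in> {1..k}"
    have a1: "a \<in> {1..k+1}" "a + 1 \<in> {1..k+1}" using a by auto
    have ra: "z (ii (a + 1)) = z (ii a) * spec_t k r * spec_q k r ^ (s a)" and oa: "s a = 0 \<longrightarrow> ii a < ii (a + 1)"
      using rel a by auto
    have o: "s a = 0 \<longrightarrow> lam n (ii a) < lam n (ii (a + 1))"
    proof
      assume "s a = 0"
      then have "ii a < ii (a + 1)" using oa by simp
      then show "lam n (ii a) < lam n (ii (a + 1))" unfolding rv[OF a1(1)] rv[OF a1(2)] using lt[OF a1(1)] by linarith
    qed
    show "opti q n z (lam n (ii (a + 1))) = opti q n z (lam n (ii a)) * spec_t k r * spec_q k r ^ s a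
     \<and> (s a = 0 \<longrightarrow> lam n (ii a) < lam n (ii (a + 1)))"
      unfolding wv[OF a1(1)] wv[OF a1(2)] using ra o by simp
  qed
  show ?thesis unfolding chainP_def using R1 R2 R3 sm by blast
qed

lemma omegai_caseB:
  assumes n: "n \<ge> 2" and c: "chainP n k r z ii s" and cc: "cc \<in> {2..k+1}" and iic: "ii cc = 1"
  shows "chainP n k r (opti (spec_q k r) n z) (\<lambda>a. lam n (ii a))
           (\<lambda>a. if a = cc - 1 then s a - 1 else if a = cc then s a + 1 else s a)"
proof -
  let ?q = "spec_q k r" and ?t = "spec_t k r"
  let ?s = "\<lambda>a. if a = cc - 1 then s a - 1 else if a = cc then s a + 1 else s a"
  let ?w = "opti ?q n z"
  have rng: "\<forall>a\<in>{1..k+1}. ii a \<in> {1..n}" and inj: "inj_on ii {1..k+1}"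
    and rel: "\<forall>a\<in>{1..k}. z (ii (a + 1)) = z (ii a) * ?t * ?q ^ (s a) \<and> (s a = 0 \<longrightarrow> ii a < ii (a + 1))"
    and sm: "(\<Sum>a=1..k. s a) \<le> r - 2"
    using c unfolding chainP_def by auto
  have qnz: "?q \<noteq> 0" by (rule q_nz)
  have ne: "ii a \<noteq> 1" if a: "a \<in> {1..k+1}" "a \<noteq> cc" for a
  proof
    assume "ii a = 1"
    then have "ii a = ii cc" using iic by simp
    then have "a = cc" using inj a(1) cc by (auto dest: inj_onD)
    then show False using a(2) by simp
  qed
  have lt: "a \<in> {1..k+1} \<Longrightarrow> a \<noteq> cc \<Longrightarrow> 2 \<le> ii a \<and> ii a \<le> n" for a
    using rng ne by force
  have rv: "a \<in> {1..k+1} \<Longrightarrow> a \<noteq> cc \<Longrightarrow> lam n (ii a) = ii a - 1" for a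
    using ne by (simp add: lam_def)
  have rc: "lam n (ii cc) = n" using iic by (simp add: lam_def)
  have wv: "?w (lam n (ii a)) = z (ii a)" if "a \<in> {1..k+1}" "a \<noteq> cc" for a
    using lt[OF that] by (intro opti_lam[OF n]) auto
  have wc: "?w (lam n (ii cc)) = inverse ?q * z 1" using iic opti_lam_1[OF n] by simp
  have cm: "cc - 1 \<in> {1..k}" "cc - 1 + 1 = cc" "cc - 1 \<noteq> cc" using cc by auto
  have scpos: "s (cc - 1) \<ge> 1"
  proof (rule ccontr)
    assume "\<not> s (cc - 1) \<ge> 1"
    then have "ii (cc - 1) < ii cc" using rel cm by (metis less_one not_less)
    moreover have "ii (cc - 1) \<ge> 1" using rng cm by force
    ultimately show False using iic by simp
  qed
  have R1: "\<forall>a\<in>{1..k+1}. lam n (ii a) \<in> {1..n}"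
  proof
    fix a assume a: "a \<in> {1..k+1}"
    show "lam n (ii a) \<in> {1..n}"
    proof (cases "a = cc")
      case True then show ?thesis using rc n by simp
    next
      case False then show ?thesis unfolding rv[OF a False] using lt[OF a False] by auto
    qed
  qed
  have R2: "inj_on (\<lambda>a. lam n (ii a)) {1..k+1}"
  proof (rule inj_onI)
    fix a b assume a: "a \<in> {1..k+1}" and b: "b \<in> {1..k+1}" and e: "lam n (ii a) = lam n (ii b)"
    have "ii a = ii b"
    proof (cases "a = cc")
      case True
      show ?thesis
      proof (cases "b = cc")
        case True then show ?thesis using \<open>a = cc\<close> by simp
      next
        case False
        have "n = ii b - 1" using e rv[OF b False] rc \<open>a = cc\<close> by simp
        then show ?thesis using lt[OF b False] by linarith
      qed
    next
      case False
      show ?thesis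
      proof (cases "b = cc")
        case True
        have "n = ii a - 1" using e rv[OF a False] rc True by simp
        then show ?thesis using lt[OF a False] by linarith
      next
        case bF: False
        have "ii a - 1 = ii b - 1" using e rv[OF a False] rv[OF b bF] by simp
        then show ?thesis using lt[OF a False] lt[OF b bF] by linarith
      qed
    qed
    then show "a = b" using inj a b by (auto dest: inj_onD)
  qed
  have R3: "\<forall>a\<in>{1..k}. ?w (lam n (ii (a + 1))) = ?w (lam n (ii a)) * ?t * ?q ^ ?s a
          \<and> (?s a = 0 \<longrightarrow> lam n (ii a) < lam n (ii (a + 1)))"
  proof
    fix a assume a: "a \<in> {1..k}"
    have a1: "a \<in> {1..k+1}" "a + 1 \<in> {1..k+1}" using a by auto
    have ra: "z (ii (a + 1)) = z (ii a) * ?t * ?q ^ (s a)" and oa: "s a = 0 \<longrightarrow> ii a < ii (a + 1)"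
      using rel a by auto
    show "?w (lam n (ii (a + 1))) = ?w (lam n (ii a)) * ?t * ?q ^ ?s a
          \<and> (?s a = 0 \<longrightarrow> lam n (ii a) < lam n (ii (a + 1)))"
    proof (cases "a + 1 = cc")
      case True
      have ac: "a \<noteq> cc" using True by simp
      have aeq: "a = cc - 1" using True by simp
      have sa: "?s a = s a - 1" using aeq by simp
      have pw: "?q ^ s a = ?q * ?q ^ (s a - 1)" using scpos aeq by (cases "s a") auto
      have e1: "?w (lam n (ii (a + 1))) = inverse ?q * z 1" using wc True by simp
      have e2: "?w (lam n (ii a)) = z (ii a)" by (rule wv[OF a1(1) ac])
      have "inverse ?q * z 1 = z (ii a) * ?t * ?q ^ (s a - 1)"
        using ra True iic pw qnz by (simp add: field_simps)
      then have eq: "?w (lam n (ii (a + 1))) = ?w (lam n (ii a)) * ?t * ?q ^ ?s a"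
        unfolding e1 e2 sa .
      have "lam n (ii a) < lam n (ii (a + 1))"
        unfolding rv[OF a1(1) ac] using True rc lt[OF a1(1) ac] by simp linarith
      then show ?thesis using eq by simp
    next
      case False
      note aF = False
      have e1: "?w (lam n (ii (a + 1))) = z (ii (a + 1))" by (rule wv[OF a1(2) aF])
      show ?thesis
      proof (cases "a = cc")
        case True
        have sa: "?s a = s a + 1" using True cm by auto
        have e2: "?w (lam n (ii a)) = inverse ?q * z 1" using wc True by simp
        have "z (ii (a + 1)) = inverse ?q * z 1 * ?t * ?q ^ (s a + 1)"
          using ra True iic qnz by (simp add: field_simps)
        then have eq: "?w (lam n (ii (a + 1))) = ?w (lam n (ii a)) * ?t * ?q ^ ?s a"
          unfolding e1 e2 sa .
        then show ?thesis using sa by simp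
      next
        case False
        have sa: "?s a = s a" using False aF cm by auto
        have e2: "?w (lam n (ii a)) = z (ii a)" by (rule wv[OF a1(1) False])
        have eq: "?w (lam n (ii (a + 1))) = ?w (lam n (ii a)) * ?t * ?q ^ ?s a"
          unfolding e1 e2 sa by (rule ra)
        have "?s a = 0 \<longrightarrow> lam n (ii a) < lam n (ii (a + 1))"
          unfolding rv[OF a1(1) False] rv[OF a1(2) aF] sa using oa lt[OF a1(1) False] lt[OF a1(2) aF] by linarith
        then show ?thesis using eq by simp
      qed
    qed
  qed
  have "(\<Sum>a=1..k. ?s a) \<le> (\<Sum>a=1..k. s a)"
    using cm scpos by (intro sum_bump) auto
  then have R4: "(\<Sum>a=1..k. ?s a) \<le> r - 2" using sm by simp
  show ?thesis unfolding chainP_def using R1 R2 R3 R4 by blast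
qed

lemma opti_n: "n \<ge> 2 \<Longrightarrow> opti q n z n = inverse q * z 1"
  using opti_lam_1[of n q z] by (simp add: lam_def)

lemma omegai_caseC:
  assumes n: "n \<ge> 2" and r: "r \<ge> 2" and k: "k \<ge> 1" and c: "chainP n k r z ii s" and iic: "ii 1 = 1"
  shows "chainP n k r (opti (spec_q k r) n z) (\<lambda>a. if a = k + 1 then n else lam n (ii (a + 1)))
           (\<lambda>a. if a = k then r - 2 - (\<Sum>a=1..k. s a) else s (a + 1))"
proof -
  let ?q = "spec_q k r" and ?t = "spec_t k r"
  define S where "S = (\<Sum>a=1..k. s a)"
  let ?s = "\<lambda>a. if a = k then r - 2 - S else s (a + 1)"
  let ?ii = "\<lambda>a. if a = k + 1 then n else lam n (ii (a + 1))"
  let ?w = "opti ?q n z"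
  have rng: "\<forall>a\<in>{1..k+1}. ii a \<in> {1..n}" and inj: "inj_on ii {1..k+1}"
    and rel: "\<forall>a\<in>{1..k}. z (ii (a + 1)) = z (ii a) * ?t * ?q ^ (s a) \<and> (s a = 0 \<longrightarrow> ii a < ii (a + 1))"
    and sm: "S \<le> r - 2"
    using c unfolding chainP_def S_def by auto
  have qnz: "?q \<noteq> 0" by (rule q_nz)
  have ne: "ii a \<noteq> 1" if a: "a \<in> {2..k+1}" for a
  proof
    assume "ii a = 1"
    then have "ii a = ii 1" using iic by simp
    then have "a = 1" using inj a by (auto dest: inj_onD)
    then show False using a by simp
  qed
  have lt: "2 \<le> ii a \<and> ii a \<le> n" if a: "a \<in> {2..k+1}" for a
  proof -
    have "ii a \<in> {1..n}" using rng a by auto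
    then show ?thesis using ne[OF a] by auto
  qed
  have rv: "lam n (ii a) = ii a - 1" if "a \<in> {2..k+1}" for a
    using ne[OF that] by (simp add: lam_def)
  have wv: "?w (lam n (ii a)) = z (ii a)" if "a \<in> {2..k+1}" for a
    using lt[OF that] by (intro opti_lam[OF n]) auto
  have R1: "\<forall>a\<in>{1..k+1}. ?ii a \<in> {1..n}"
  proof
    fix a assume a: "a \<in> {1..k+1}"
    show "?ii a \<in> {1..n}"
    proof (cases "a = k + 1")
      case True then show ?thesis using n by simp
    next
      case False
      then have a': "a + 1 \<in> {2..k+1}" using a by auto
      show ?thesis using False unfolding if_not_P[OF False] rv[OF a'] using lt[OF a'] by auto
    qed
  qed
  have R2: "inj_on ?ii {1..k+1}"
  proof (rule inj_onI)
    fix a b assume a: "a \<in> {1..k+1}" and b: "b \<in> {1..k+1}" and e: "?ii a = ?ii b"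
    show "a = b"
    proof (cases "a = k + 1")
      case True
      show ?thesis
      proof (cases "b = k + 1")
        case True then show ?thesis using \<open>a = k + 1\<close> by simp
      next
        case False
        then have b': "b + 1 \<in> {2..k+1}" using b by auto
        have "n = ii (b + 1) - 1" using e False \<open>a = k + 1\<close> rv[OF b'] by simp
        then show ?thesis using lt[OF b'] by linarith
      qed
    next
      case False
      then have a': "a + 1 \<in> {2..k+1}" using a by auto
      show ?thesis
      proof (cases "b = k + 1")
        case True
        have "n = ii (a + 1) - 1" using e False True rv[OF a'] by simp
        then show ?thesis using lt[OF a'] by linarith
      next
        case bF: False
        then have b': "b + 1 \<in> {2..k+1}" using b by auto
        have "ii (a + 1) - 1 = ii (b + 1) - 1" using e False bF rv[OF a'] rv[OF b'] by simp
        then have "ii (a + 1) = ii (b + 1)" using lt[OF a'] lt[OF b'] by linarith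
        then have "a + 1 = b + 1" using inj a' b' by (auto dest: inj_onD)
        then show ?thesis by simp
      qed
    qed
  qed
  have cp: "z (ii (k + 1)) = z (ii 1) * ?t ^ k * ?q ^ S"
  proof -
    have h: "z (ii (1 + k)) = z (ii 1) * ?t ^ k * ?q ^ (\<Sum>c\<in>{1..<1+k}. s c)"
      by (rule chain_prod[OF c]) auto
    have st: "{1..<1+k} = {1..k}" by auto
    have "1 + k = k + 1" by simp
    then show ?thesis using h unfolding st S_def by metis
  qed
  have cyc: "?t ^ (k + 1) * ?q ^ (r - 2) = inverse ?q"
  proof -
    have "?t ^ (k + 1) * ?q ^ (r - 2) * ?q = ?t ^ (k + 1) * ?q ^ (r - 1)"
      using r by (simp add: mult.assoc power_Suc2[symmetric] Suc_diff_Suc numeral_2_eq_2)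
    also have "\<dots> = 1" by (rule cycle_id[OF r])
    finally show ?thesis using qnz by (simp add: field_simps)
  qed
  have R3: "\<forall>a\<in>{1..k}. ?w (?ii (a + 1)) = ?w (?ii a) * ?t * ?q ^ ?s a
          \<and> (?s a = 0 \<longrightarrow> ?ii a < ?ii (a + 1))"
  proof
    fix a assume a: "a \<in> {1..k}"
    show "?w (?ii (a + 1)) = ?w (?ii a) * ?t * ?q ^ ?s a \<and> (?s a = 0 \<longrightarrow> ?ii a < ?ii (a + 1))"
    proof (cases "a = k")
      case True
      have k1: "k + 1 \<in> {2..k+1}" using k by simp
      have e1: "?w (?ii (a + 1)) = inverse ?q * z (ii 1)" using True opti_n[OF n] iic by simp
      have e2: "?w (?ii a) = z (ii (k + 1))" using True wv[OF k1] by simp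
      have sa: "?s a = r - 2 - S" using True by simp
      have ee: "r - 2 = S + (r - 2 - S)" using sm by simp
      have "z (ii (k + 1)) * ?t * ?q ^ (r - 2 - S) = z (ii 1) * (?t ^ (k + 1) * (?q ^ S * ?q ^ (r - 2 - S)))"
        unfolding cp by (simp add: mult_ac)
      also have "?q ^ S * ?q ^ (r - 2 - S) = ?q ^ (r - 2)"
        by (subst ee) (simp only: power_add)
      also have "z (ii 1) * (?t ^ (k + 1) * ?q ^ (r - 2)) = inverse ?q * z (ii 1)"
        unfolding cyc by simp
      finally have eq: "?w (?ii (a + 1)) = ?w (?ii a) * ?t * ?q ^ ?s a" unfolding e1 e2 sa by simp
      have "?ii a < ?ii (a + 1)" using True rv[OF k1] lt[OF k1] by simp linarith
      then show ?thesis using eq by simp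
    next
      case False
      have a1: "a + 1 \<in> {2..k+1}" "a + 2 \<in> {2..k+1}" using a False by auto
      have a'': "a + 1 \<in> {1..k}" using a False by auto
      have e1: "?w (?ii (a + 1)) = z (ii (a + 2))" using wv[OF a1(2)] False by simp
      have e2: "?w (?ii a) = z (ii (a + 1))" using wv[OF a1(1)] a by simp
      have sa: "?s a = s (a + 1)" using False by simp
      have ra: "z (ii (a + 2)) = z (ii (a + 1)) * ?t * ?q ^ s (a + 1)" and oa: "s (a + 1) = 0 \<longrightarrow> ii (a + 1) < ii (a + 2)"
        using rel a'' by (simp_all add: add.assoc)
      have eq: "?w (?ii (a + 1)) = ?w (?ii a) * ?t * ?q ^ ?s a" unfolding e1 e2 sa by (rule ra)
      have ia: "?ii a = ii (a + 1) - 1" "?ii (a + 1) = ii (a + 2) - 1"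
        using rv[OF a1(1)] rv[OF a1(2)] a False by auto
      have "?s a = 0 \<longrightarrow> ?ii a < ?ii (a + 1)" unfolding ia sa using oa lt[OF a1(1)] by linarith
      then show ?thesis using eq by simp
    qed
  qed
  have "(\<Sum>a=1..k. ?s a) = (r - 2 - S) + (\<Sum>a=2..k. s a)" by (rule sum_SB[OF k])
  moreover have "(\<Sum>a=2..k. s a) \<le> S" unfolding S_def by (intro sum_mono2) auto
  ultimately have R4: "(\<Sum>a=1..k. ?s a) \<le> r - 2" using sm by simp
  show ?thesis unfolding chainP_def S_def[symmetric] using R1 R2 R3 R4 by blast
qed

lemma omegai_wheel:
  assumes n: "n \<ge> 2" and r: "r \<ge> 2" and k: "k \<ge> 1" and z: "z \<in> wheelZ n k r"
  shows "opti (spec_q k r) n z \<in> wheelZ n k r"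
proof -
  obtain ii s where c: "chainP n k r z ii s" and nz: "\<forall>j\<in>{1..n}. z j \<noteq> 0"
    using z unfolding wheelZ_iff by blast
  have nz': "\<forall>j\<in>{1..n}. opti (spec_q k r) n z j \<noteq> 0"
  proof
    fix j assume j: "j \<in> {1..n}"
    show "opti (spec_q k r) n z j \<noteq> 0"
    proof (cases "j = n")
      case True
      have "opti (spec_q k r) n z n = inverse (spec_q k r) * z 1" by (rule opti_n[OF n])
      then show ?thesis using nz n q_nz[of k r] True by simp
    next
      case False
      then have "opti (spec_q k r) n z j = z (j + 1)" using j by (simp add: opti_def sigOi_def)
      moreover have "j + 1 \<in> {1..n}" using j False by auto
      ultimately show ?thesis using nz by simp
    qed
  qed
  have "\<exists>ii' s'. chainP n k r (opti (spec_q k r) n z) ii' s'"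
  proof (cases "1 \<in> ii ` {1..k+1}")
    case False then show ?thesis using omegai_caseA[OF n c False] by blast
  next
    case True
    then obtain cc where cc: "cc \<in> {1..k+1}" "ii cc = 1" by auto
    show ?thesis
    proof (cases "cc = 1")
      case True then show ?thesis using omegai_caseC[OF n r k c] cc by blast
    next
      case False
      then have "cc \<in> {2..k+1}" using cc by auto
      then show ?thesis using omegai_caseB[OF n c _ cc(2)] by blast
    qed
  qed
  then show ?thesis using nz' unfolding wheelZ_iff by blast
qed

lemma K_infinite: "infinite (UNIV :: K set)"
proof
  assume "finite (UNIV :: K set)"
  then have "finite (range (of_nat :: nat \<Rightarrow> K))" by (rule finite_subset[rotated]) simp
  then have "finite (UNIV :: nat set)" using finite_imageD K_ofnat_inj by blast
  then show False by simp
qed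

lemma mon_upd:
  fixes z :: "nat \<Rightarrow> K"
  shows "mon (z(j := y)) \<alpha> = mon (z(j := 1)) \<alpha> * y powi Poly_Mapping.lookup \<alpha> j"
proof -
  let ?S = "Poly_Mapping.keys \<alpha> \<union> {j}"
  have sp: "(\<Prod>i\<in>?S. g i) = g j * (\<Prod>i\<in>?S - {j}. g i)" for g :: "nat \<Rightarrow> K"
    by (rule prod.remove) auto
  have R: "(\<Prod>i\<in>?S - {j}. (z(j := y)) i powi Poly_Mapping.lookup \<alpha> i) = (\<Prod>i\<in>?S - {j}. (z(j := 1)) i powi Poly_Mapping.lookup \<alpha> i)"
    by (rule prod.cong) auto
  have "mon (z(j := y)) \<alpha> = (\<Prod>i\<in>?S. (z(j := y)) i powi Poly_Mapping.lookup \<alpha> i)"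
    by (rule mon_superset) auto
  also have "\<dots> = (z(j := y)) j powi Poly_Mapping.lookup \<alpha> j * (\<Prod>i\<in>?S - {j}. (z(j := y)) i powi Poly_Mapping.lookup \<alpha> i)"
    by (rule sp)
  also have "\<dots> = y powi Poly_Mapping.lookup \<alpha> j * (\<Prod>i\<in>?S - {j}. (z(j := 1)) i powi Poly_Mapping.lookup \<alpha> i)"
    by (simp only: R fun_upd_same)
  also have "(\<Prod>i\<in>?S - {j}. (z(j := 1)) i powi Poly_Mapping.lookup \<alpha> i) = mon (z(j := 1)) \<alpha>"
  proof -
    have "mon (z(j := 1)) \<alpha> = (\<Prod>i\<in>?S. (z(j := 1)) i powi Poly_Mapping.lookup \<alpha> i)"
      by (rule mon_superset) auto
    also have "\<dots> = (z(j := 1)) j powi Poly_Mapping.lookup \<alpha> j * (\<Prod>i\<in>?S - {j}. (z(j := 1)) i powi Poly_Mapping.lookup \<alpha> i)"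
      by (rule sp)
    finally show ?thesis by simp
  qed
  finally show ?thesis by (simp only: ac_simps)
qed

lemma leval_upd_expand:
  fixes z :: "nat \<Rightarrow> K"
  shows "y \<noteq> 0 \<Longrightarrow> leval (z(j := y)) g = (\<Sum>\<alpha>\<in>Poly_Mapping.keys g. (Poly_Mapping.lookup g \<alpha> * mon (z(j := 1)) \<alpha>) * y powi Poly_Mapping.lookup \<alpha> j)"
  unfolding leval_mon
  by (rule sum.cong[OF refl], subst mon_upd, simp only: mult.assoc)

lemma field_viol:
  fixes st :: K
  assumes "st \<noteq> 0" "st * st \<noteq> 1"
  shows "st + (st - inverse st) / (inverse (st * st) - 1) = 0"
proof -
  have a: "inverse (st * st) - 1 = (1 - st * st) / (st * st)" using assms by (simp add: field_simps)
  have b: "1 - st * st \<noteq> 0" using assms(2) by simp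
  show ?thesis unfolding a using assms b by (simp add: field_simps)
qed

context
  fixes n k r :: nat
  assumes n: "n \<ge> 2" and k: "k \<ge> 1" and r: "r \<ge> 2"
begin

lemma T_van_ne:
  assumes f: "f \<in> idealI n k r" and i: "1 \<le> i" "i + 1 \<le> n"
    and z: "z \<in> wheelZ n k r" "nzp z" and ne: "z i \<noteq> z (i + 1)"
  shows "leval z (heckeT (spec_st k r) i f) = 0"
proof -
  let ?st = "spec_st k r" and ?c = "spec_st k r - inverse (spec_st k r)"
  let ?z' = "\<lambda>j. z (tsw i j)"
  have F: "leval z f = 0" using idealI_van[OF f z(1)] .
  have Tp: "leval z (heckeT ?st i f) = ?st * leval ?z' f + ?c * (leval ?z' f - leval z f) / (z i / z (i + 1) - 1)"
    by (rule heckeT_pt[OF z(2) ne])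
  obtain ii s where c: "chainP n k r z ii s" using z(1) unfolding wheelZ_iff by blast
  show ?thesis
  proof (cases "\<exists>a\<in>{1..k}. ii a = i \<and> ii (a + 1) = i + 1 \<and> s a = 0")
    case True
    then obtain a where a: "a \<in> {1..k}" "ii a = i" "ii (a + 1) = i + 1" "s a = 0" by blast
    have "z (ii (a + 1)) = z (ii a) * spec_t k r * spec_q k r ^ s a" using c a(1) unfolding chainP_def by auto
    then have zi: "z (i + 1) = z i * (?st * ?st)" using a by (simp add: spec_t_def power2_eq_square)
    have zi0: "z i \<noteq> 0" using z(2) by simp
    have rho: "z i / z (i + 1) = inverse (?st * ?st)" using zi zi0 st_nz[of k r] by (simp add: field_simps)
    have ss: "?st * ?st \<noteq> 1" using ne zi by auto
    have "leval z (heckeT ?st i f) = leval ?z' f * (?st + ?c / (inverse (?st * ?st) - 1))"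
      unfolding Tp F rho by (simp add: algebra_simps)
    also have "?st + ?c / (inverse (?st * ?st) - 1) = 0" by (rule field_viol[OF st_nz ss])
    finally show ?thesis by simp
  next
    case False
    have c': "chainP n k r ?z' (\<lambda>a. tsw i (ii a)) s" by (rule chain_swap[OF c i False])
    have nz': "\<forall>j\<in>{1..n}. ?z' j \<noteq> 0" using z(2) by simp
    have "?z' \<in> wheelZ n k r" using c' nz' unfolding wheelZ_iff by blast
    then have "leval ?z' f = 0" by (rule idealI_van[OF f])
    then show ?thesis unfolding Tp F by simp
  qed
qed

lemma T_van:
  assumes f: "f \<in> idealI n k r" and i: "1 \<le> i" "i + 1 \<le> n"
    and z: "z \<in> wheelZ n k r" "nzp z"
  shows "leval z (heckeT (spec_st k r) i f) = 0"
proof (cases "z i = z (i + 1)")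
  case False then show ?thesis using T_van_ne[OF f i z] by simp
next
  case True
  let ?g = "heckeT (spec_st k r) i f"
  obtain ii s where c: "chainP n k r z ii s" and nz: "\<forall>j\<in>{1..n}. z j \<noteq> 0"
    using z(1) unfolding wheelZ_iff by blast
  have "\<exists>j j'. j \<notin> ii ` {1..k+1} \<and> ((j = i \<and> j' = i + 1) \<or> (j = i + 1 \<and> j' = i))"
    using chain_not_both[OF r c nz True] by blast
  then obtain j j' where jj: "j \<notin> ii ` {1..k+1}" "(j = i \<and> j' = i + 1) \<or> (j = i + 1 \<and> j' = i)"
    by blast
  have jj3: "j \<noteq> j'" using jj(2) by auto
  have van: "leval (z(j := y)) ?g = 0" if y: "y \<in> UNIV - {0, z j'}" for y
  proof -
    have c': "chainP n k r (z(j := y)) ii s" by (rule chain_upd[OF c jj(1)])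
    have nz': "\<forall>l\<in>{1..n}. (z(j := y)) l \<noteq> 0" using nz y by auto
    have w: "z(j := y) \<in> wheelZ n k r" using c' nz' unfolding wheelZ_iff by blast
    have nzp': "nzp (z(j := y))" using z(2) y by auto
    have "(z(j := y)) i \<noteq> (z(j := y)) (i + 1)"
    proof -
      have "(z(j := y)) j = y" "(z(j := y)) j' = z j'" using jj3 by auto
      then show ?thesis using y jj(2) by auto
    qed
    then show ?thesis by (rule T_van_ne[OF f i w nzp'])
  qed
  have inf: "infinite (UNIV - {0, z j'})" using K_infinite by simp
  have z0: "(0::K) \<notin> UNIV - {0, z j'}" by simp
  have all: "\<forall>y. y \<noteq> 0 \<longrightarrow> (\<Sum>\<alpha>\<in>Poly_Mapping.keys ?g. (Poly_Mapping.lookup ?g \<alpha> * mon (z(j := 1)) \<alpha>) * y powi Poly_Mapping.lookup \<alpha> j) = 0"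
  proof (rule laurent_univ(1)[OF _ inf z0])
    show "finite (Poly_Mapping.keys ?g)" by simp
    show "\<forall>y\<in>UNIV - {0, z j'}. (\<Sum>\<alpha>\<in>Poly_Mapping.keys ?g. (Poly_Mapping.lookup ?g \<alpha> * mon (z(j := 1)) \<alpha>) * y powi Poly_Mapping.lookup \<alpha> j) = 0"
    proof
      fix y assume y: "y \<in> UNIV - {0, z j'}"
      then have "y \<noteq> 0" by simp
      then have "leval (z(j := y)) ?g = (\<Sum>\<alpha>\<in>Poly_Mapping.keys ?g. (Poly_Mapping.lookup ?g \<alpha> * mon (z(j := 1)) \<alpha>) * y powi Poly_Mapping.lookup \<alpha> j)"
        by (rule leval_upd_expand)
      then show "(\<Sum>\<alpha>\<in>Poly_Mapping.keys ?g. (Poly_Mapping.lookup ?g \<alpha> * mon (z(j := 1)) \<alpha>) * y powi Poly_Mapping.lookup \<alpha> j) = 0"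
        using van[OF y] by simp
    qed
  qed
  have zj: "z j \<noteq> 0" using z(2) by simp
  have "leval (z(j := z j)) ?g = (\<Sum>\<alpha>\<in>Poly_Mapping.keys ?g. (Poly_Mapping.lookup ?g \<alpha> * mon (z(j := 1)) \<alpha>) * z j powi Poly_Mapping.lookup \<alpha> j)"
    by (rule leval_upd_expand[OF zj])
  then have "leval (z(j := z j)) ?g = 0" using all zj by simp
  then show ?thesis by simp
qed

lemma ideal_T:
  assumes f: "f \<in> idealI n k r" and i: "1 \<le> i" "i + 1 \<le> n"
  shows "heckeT (spec_st k r) i f \<in> idealI n k r"
  by (rule idealI_intro[OF V_heckeT[OF i idealI_V[OF f]]]) (rule T_van[OF f i])

lemma ideal_diff_lc:
  assumes "f \<in> idealI n k r" "g \<in> idealI n k r"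
  shows "f - lconst a * g \<in> idealI n k r"
proof (rule idealI_intro)
  show "f - lconst a * g \<in> laurentV n"
    using assms by (intro V_diff V_mult V_lconst idealI_V)
  fix z assume z: "z \<in> wheelZ n k r" "nzp z"
  show "leval z (f - lconst a * g) = 0"
    using idealI_van[OF assms(1) z(1)] idealI_van[OF assms(2) z(1)] leval_lc[OF z(2)] by simp
qed

lemma ideal_Tinv:
  assumes f: "f \<in> idealI n k r" and i: "1 \<le> i" "i + 1 \<le> n"
  shows "heckeTinv (spec_st k r) i f \<in> idealI n k r"
  unfolding heckeTinv_eq[OF st_nz] by (rule ideal_diff_lc[OF ideal_T[OF f i] f])

lemma ideal_lvar:
  assumes f: "f \<in> idealI n k r" and i: "i \<in> {1..n}"
  shows "lvar i * f \<in> idealI n k r" "lvar_inv i * f \<in> idealI n k r"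
proof -
  show "lvar i * f \<in> idealI n k r"
  proof (rule idealI_intro)
    show "lvar i * f \<in> laurentV n" using f i by (intro V_mult V_lvar idealI_V)
    fix z assume z: "z \<in> wheelZ n k r" "nzp z"
    show "leval z (lvar i * f) = 0" using idealI_van[OF f z(1)] z(2) by (simp add: leval_mult)
  qed
  show "lvar_inv i * f \<in> idealI n k r"
  proof (rule idealI_intro)
    show "lvar_inv i * f \<in> laurentV n" using f i by (intro V_mult V_lvar_inv idealI_V)
    fix z assume z: "z \<in> wheelZ n k r" "nzp z"
    show "leval z (lvar_inv i * f) = 0" using idealI_van[OF f z(1)] z(2) by (simp add: leval_mult)
  qed
qed

lemma ideal_omega:
  assumes f: "f \<in> idealI n k r"
  shows "omega (spec_q k r) n f \<in> idealI n k r" "omegainv (spec_q k r) n f \<in> idealI n k r"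
proof -
  have n1: "n \<ge> 1" using n by simp
  show "omega (spec_q k r) n f \<in> idealI n k r"
  proof (rule idealI_intro)
    show "omega (spec_q k r) n f \<in> laurentV n" using f by (intro V_omega idealI_V)
    fix z assume z: "z \<in> wheelZ n k r" "nzp z"
    show "leval z (omega (spec_q k r) n f) = 0"
      unfolding leval_omega[OF n1] using idealI_van[OF f omega_wheel[OF n r k z(1)]] .
  qed
  show "omegainv (spec_q k r) n f \<in> idealI n k r"
  proof (rule idealI_intro)
    show "omegainv (spec_q k r) n f \<in> laurentV n" using f by (intro V_omegainv idealI_V)
    fix z assume z: "z \<in> wheelZ n k r" "nzp z"
    show "leval z (omegainv (spec_q k r) n f) = 0"
      unfolding leval_omegainv[OF n1] using idealI_van[OF f omegai_wheel[OF n r k z(1)]] .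
  qed
qed

end

lemma foldr_pres:
  assumes "\<And>j g. j \<in> set xs \<Longrightarrow> g \<in> P \<Longrightarrow> F j g \<in> P" "f \<in> P"
  shows "foldr F xs f \<in> P"
  using assms by (induction xs) auto

lemma foldr_inv:
  assumes "\<And>j h. G j (F j h) = h"
  shows "foldr G xs (foldr F (rev xs) h) = h"
  using assms by (induction xs arbitrary: h) auto

lemma omega_omegainv:
  fixes q :: K
  assumes n: "n \<ge> 2" and q: "q \<noteq> 0"
  shows "omega q n (omegainv q n f) = f" "omegainv q n (omega q n f) = f"
proof -
  have n1: "n \<ge> 1" using n by simp
  show "omega q n (omegainv q n f) = f"
    by (rule identity_eq[OF K_ofnat_inj]) (simp add: leval_omega[OF n1] leval_omegainv[OF n1] opt_opti[OF n q])
  show "omegainv q n (omega q n f) = f"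
    by (rule identity_eq[OF K_ofnat_inj]) (simp add: leval_omega[OF n1] leval_omegainv[OF n1] opti_opt[OF n q])
qed

definition Yinv' :: "K \<Rightarrow> K \<Rightarrow> nat \<Rightarrow> nat \<Rightarrow> K laurent \<Rightarrow> K laurent" where
  "Yinv' st q n i f = foldr (heckeT st) (rev [1..<i]) (omegainv q n (foldr (heckeTinv st) (rev [i..<n]) f))"

lemma daha_Yinv_eq:
  fixes st q :: K
  assumes n: "n \<ge> 2" and st: "st \<noteq> 0" and q: "q \<noteq> 0"
  shows "daha_Yinv st q n i f = Yinv' st q n i f"
  unfolding daha_Yinv_def
proof (rule the_equality)
  show "daha_Y st q n i (Yinv' st q n i f) = f"
    unfolding daha_Y_def Yinv'_def
    by (simp add: foldr_inv heckeTinv_T[OF st] heckeT_Tinv[OF st] omega_omegainv[OF n q])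
next
  fix g assume g: "daha_Y st q n i g = f"
  have "Yinv' st q n i (daha_Y st q n i g) = g"
  proof -
    have a: "foldr (heckeTinv st) (rev [i..<n]) (foldr (heckeT st) [i..<n] h) = h" for h
      using foldr_inv[of "heckeTinv st" "heckeT st" "rev [i..<n]" h] heckeTinv_T[OF st] by simp
    have b: "foldr (heckeT st) (rev [1..<i]) (foldr (heckeTinv st) [1..<i] h) = h" for h
      using foldr_inv[of "heckeT st" "heckeTinv st" "rev [1..<i]" h] heckeT_Tinv[OF st] by simp
    show ?thesis unfolding daha_Y_def Yinv'_def a omega_omegainv[OF n q] b ..
  qed
  then show "g = Yinv' st q n i f" using g by simp
qed

theorem proposition3p1:
  fixes n k r :: nat
  assumes "n \<ge> 2" and "1 \<le> k" and "k \<le> n - 1" and "r \<ge> 2"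
  shows "\<forall>f\<in>idealI n k r.
     (\<forall>i\<in>{1..n}.
        lvar i * f \<in> idealI n k r \<and>
        lvar_inv i * f \<in> idealI n k r \<and>
        daha_Y (spec_st k r) (spec_q k r) n i f \<in> idealI n k r \<and>
        daha_Yinv (spec_st k r) (spec_q k r) n i f \<in> idealI n k r) \<and>
     (\<forall>i\<in>{1..n-1}.
        heckeT (spec_st k r) i f \<in> idealI n k r \<and>
        heckeTinv (spec_st k r) i f \<in> idealI n k r)"
proof (intro ballI conjI)
  note n = assms(1) and k = assms(2) and r = assms(4)
  let ?I = "idealI n k r"
  have Tp: "heckeT (spec_st k r) j g \<in> ?I" if "j \<in> set [a..<b]" "a \<ge> 1" "b \<le> n" "g \<in> ?I" for j g a b
    using that by (intro ideal_T[OF n k r]) auto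
  have Tip: "heckeTinv (spec_st k r) j g \<in> ?I" if "j \<in> set [a..<b]" "a \<ge> 1" "b \<le> n" "g \<in> ?I" for j g a b
    using that by (intro ideal_Tinv[OF n k r]) auto
  have Tp': "heckeT (spec_st k r) j g \<in> ?I" if "j \<in> set (rev [a..<b])" "a \<ge> 1" "b \<le> n" "g \<in> ?I" for j g a b
    using that by (intro ideal_T[OF n k r]) auto
  have Tip': "heckeTinv (spec_st k r) j g \<in> ?I" if "j \<in> set (rev [a..<b])" "a \<ge> 1" "b \<le> n" "g \<in> ?I" for j g a b
    using that by (intro ideal_Tinv[OF n k r]) auto
  fix f assume f: "f \<in> ?I"
  {
    fix i assume i: "i \<in> {1..n}"
    show "lvar i * f \<in> ?I" by (rule ideal_lvar(1)[OF n k r f i])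
    show "lvar_inv i * f \<in> ?I" by (rule ideal_lvar(2)[OF n k r f i])
    have A: "foldr (heckeTinv (spec_st k r)) [1..<i] f \<in> ?I"
      by (rule foldr_pres[where P = ?I]) (use i f Tip[of _ 1 i] in auto)
    have B: "omega (spec_q k r) n (foldr (heckeTinv (spec_st k r)) [1..<i] f) \<in> ?I"
      by (rule ideal_omega(1)[OF n k r A])
    show "daha_Y (spec_st k r) (spec_q k r) n i f \<in> ?I"
      unfolding daha_Y_def
      by (rule foldr_pres[where P = ?I]) (use i B Tp[of _ i n] in auto)
    have A': "foldr (heckeTinv (spec_st k r)) (rev [i..<n]) f \<in> ?I"
      by (rule foldr_pres[where P = ?I]) (use i f Tip'[of _ i n] in auto)
    have B': "omegainv (spec_q k r) n (foldr (heckeTinv (spec_st k r)) (rev [i..<n]) f) \<in> ?I"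
      by (rule ideal_omega(2)[OF n k r A'])
    show "daha_Yinv (spec_st k r) (spec_q k r) n i f \<in> ?I"
      unfolding daha_Yinv_eq[OF n st_nz q_nz] Yinv'_def
      by (rule foldr_pres[where P = ?I]) (use i B' Tp'[of _ 1 i] in auto)
  }
  {
    fix i assume i: "i \<in> {1..n-1}"
    then have i1: "1 \<le> i" "i + 1 \<le> n" using n by auto
    show "heckeT (spec_st k r) i f \<in> ?I" by (rule ideal_T[OF n k r f i1])
    show "heckeTinv (spec_st k r) i f \<in> ?I" by (rule ideal_Tinv[OF n k r f i1])
  }
qed


end
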